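(* Let $n\ge 2$ and let $A_1,\dots,A_{2^n}$ be the vertices $(\pm\tfrac12,\dots,\pm\tfrac12)$ of a cube in $\mathbb R^n$ centred at the origin $O$. Let $\Gamma$ be the sphere of radius $r>0$ centred at $O$, let $D=\{\tfrac{r}{\sqrt n}(\varepsilon_1,\dots,\varepsilon_n):\varepsilon_j\in\{1,-1\}\}$ (the points where the rays $OA_i$ meet $\Gamma$) and $E=\{\pm r\mathbf e_i:1\le i\le n\}$ (the points where the perpendiculars from $O$ to the facets of the cube meet $\Gamma$), where $\mathbf e_1,\dots,\mathbf e_n$ is the standard basis. Fix $h\ge0$ and put $H_n(M,\lambda)=\sum_{i=1}^{2^n}(|MA_i|^2+h)^{\lambda/2}$ for $M\in\Gamma$. Then: (1) If $\lambda<0$: the minimum of $H_n(\cdot,\lambda)$ on $\Gamma$ is attained precisely at the points of $E$, and, unless $h=0$ and $\Gamma$ is the circumscribed sphere of the cube (i.e. $r=\sqrt n/2$, in which case $H_n(\cdot,\lambda)$ is unbounded), the maximum is attained precisely at the points of $D$. (2) If $\lambda\in\{0,2,4,6\}$, $H_n(M,\lambda)$ is independent of $M\in\Gamma$; these are the only real $\lambda$ with this property. If $\lambda\in(0,2)\cup(4,6)$, the maximum is attained precisely at the points of $E$ and the minimum precisely at the points of $D$. If $\lambda\in(2,4)$, the minimum is attained precisely at the points of $E$ and the maximum precisely at the points of $D$. (3) If $\lambda>6$: the maximum is attained precisely at the points of $D$ and the minimum precisely at the points of $E$.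
   Context: $|MA|$ denotes Euclidean distance. *)

theory Defs
  imports "HOL-Analysis.Analysis"
begin

definition cube_vertices :: "(real^'n) set" where
  "cube_vertices = {x. \<forall>i. x $ i = 1/2 \<or> x $ i = -(1/2)}"

definition diag_points :: "real \<Rightarrow> (real^'n) set" where
  "diag_points r = {x. \<forall>i. x $ i = r / sqrt (real CARD('n)) \<or> x $ i = - (r / sqrt (real CARD('n)))}"

definition axis_points :: "real \<Rightarrow> (real^'n) set" where
  "axis_points r = {x. \<exists>i. x = r *\<^sub>R axis i 1 \<or> x = - (r *\<^sub>R axis i 1)}"

text \<open>Real power t^a for t \<ge> 0, with the convention 0^0 = 1 (Isabelle's powr has 0 powr 0 = 0).\<close>
definition rpow :: "real \<Rightarrow> real \<Rightarrow> real" where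
  "rpow t a = (if t = 0 \<and> a = 0 then 1 else t powr a)"

definition Hn :: "real \<Rightarrow> real \<Rightarrow> real^'n \<Rightarrow> real" where
  "Hn h lam M = (\<Sum>A\<in>(cube_vertices::(real^'n) set). rpow ((dist M A)\<^sup>2 + h) (lam / 2))"

definition min_points :: "'a set \<Rightarrow> ('a \<Rightarrow> real) \<Rightarrow> 'a set" where
  "min_points S f = {M\<in>S. \<forall>N\<in>S. f M \<le> f N}"

definition max_points :: "'a set \<Rightarrow> ('a \<Rightarrow> real) \<Rightarrow> 'a set" where
  "max_points S f = {M\<in>S. \<forall>N\<in>S. f N \<le> f M}"

end

theory Submission
  imports Defs
begin

lemma core:
  fixes g gA gB gC gD :: "real \<Rightarrow> real" and lo q W d1 d2 :: real
  assumes D1: "\<And>w. w > lo \<Longrightarrow> (g has_real_derivative gA w) (at w)"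
    and D2: "\<And>w. w > lo \<Longrightarrow> (gA has_real_derivative gB w) (at w)"
    and D3: "\<And>w. w > lo \<Longrightarrow> (gB has_real_derivative gC w) (at w)"
    and D4: "\<And>w. w > lo \<Longrightarrow> (gC has_real_derivative gD w) (at w)"
    and pos: "\<And>w. w > lo \<Longrightarrow> gD w > 0"
    and cont: "continuous_on {lo..} g"
    and d: "0 \<le> d1" "d1 < d2" "d2 \<le> W" and lo: "lo \<le> q - sqrt (W + d2)"
  shows "(g (q - sqrt (W - d1)) + g (q + sqrt (W - d1))) + (g (q - sqrt (W + d1)) + g (q + sqrt (W + d1)))
       < (g (q - sqrt (W - d2)) + g (q + sqrt (W - d2))) + (g (q - sqrt (W + d2)) + g (q + sqrt (W + d2)))"
proof -
  define X where "X = q - lo"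
  have Wd2: "W + d2 \<le> X\<^sup>2"
  proof -
    have "sqrt (W + d2) \<le> X" using lo X_def by simp
    hence "(sqrt (W + d2))\<^sup>2 \<le> X\<^sup>2" using d by (intro power_mono) auto
    thus ?thesis using d by simp
  qed
  have Xpos: "X > 0"
  proof -
    have s: "0 < sqrt (W + d2)" using d by simp
    show ?thesis using lo X_def s by linarith
  qed
  have qlo: "q > lo" using Xpos X_def by simp
  have A: "gC u < gC v" if "lo < u" "u < v" for u v
    using that by (intro DERIV_pos_imp_increasing[of u v gC]) (auto intro!: exI[of _ "gD _"] D4 pos)
  define G1 where "G1 x = gA (q + x) - gA (q - x)" for x
  define G2 where "G2 x = gB (q + x) + gB (q - x)" for x
  define G3 where "G3 x = gC (q + x) - gC (q - x)" for x
  define G where "G x = g (q - x) + g (q + x)" for x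
  have dG: "(G has_real_derivative G1 x) (at x)" if "0 \<le> x" "x < X" for x
  proof -
    have "((\<lambda>x. g (q - x)) has_real_derivative gA (q - x) * (0 - 1)) (at x)"
      by (rule DERIV_chain2[OF D1]) (use that X_def in \<open>auto intro!: derivative_eq_intros\<close>)
    moreover have "((\<lambda>x. g (q + x)) has_real_derivative gA (q + x) * (0 + 1)) (at x)"
      by (rule DERIV_chain2[OF D1]) (use that X_def in \<open>auto intro!: derivative_eq_intros\<close>)
    ultimately show ?thesis unfolding G_def G1_def by (auto intro: derivative_eq_intros)
  qed
  have dG1: "(G1 has_real_derivative G2 x) (at x)" if "0 \<le> x" "x < X" for x
  proof -
    have "((\<lambda>x. gA (q - x)) has_real_derivative gB (q - x) * (0 - 1)) (at x)"
      by (rule DERIV_chain2[OF D2]) (use that X_def in \<open>auto intro!: derivative_eq_intros\<close>)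
    moreover have "((\<lambda>x. gA (q + x)) has_real_derivative gB (q + x) * (0 + 1)) (at x)"
      by (rule DERIV_chain2[OF D2]) (use that X_def in \<open>auto intro!: derivative_eq_intros\<close>)
    ultimately show ?thesis unfolding G2_def G1_def by (auto intro: derivative_eq_intros)
  qed
  have dG2: "(G2 has_real_derivative G3 x) (at x)" if "0 \<le> x" "x < X" for x
  proof -
    have "((\<lambda>x. gB (q - x)) has_real_derivative gC (q - x) * (0 - 1)) (at x)"
      by (rule DERIV_chain2[OF D3]) (use that X_def in \<open>auto intro!: derivative_eq_intros\<close>)
    moreover have "((\<lambda>x. gB (q + x)) has_real_derivative gC (q + x) * (0 + 1)) (at x)"
      by (rule DERIV_chain2[OF D3]) (use that X_def in \<open>auto intro!: derivative_eq_intros\<close>)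
    ultimately show ?thesis unfolding G2_def G3_def by (auto intro: derivative_eq_intros)
  qed
  have G3pos: "G3 x > 0" if "0 < x" "x < X" for x
    using A[of "q - x" "q + x"] that X_def G3_def by simp
  define H1 where "H1 x = x * G2 x - G1 x" for x
  have dH1: "(H1 has_real_derivative x * G3 x) (at x)" if "0 \<le> x" "x < X" for x
  proof -
    have "(H1 has_real_derivative (x * G3 x + 1 * G2 x) - G2 x) (at x)"
      unfolding H1_def by (intro DERIV_diff DERIV_mult' DERIV_ident dG1 dG2 that)
    thus ?thesis by simp
  qed
  have H1pos: "H1 x > 0" if "0 < x" "x < X" for x
  proof -
    have "H1 0 < H1 x"
    proof (rule DERIV_pos_imp_increasing_open[OF that(1)])
      fix y assume "0 < y" "y < x"
      thus "\<exists>z. DERIV H1 y :> z \<and> z > 0" using that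
        by (intro exI[of _ "y * G3 y"]) (auto intro!: dH1 G3pos mult_pos_pos)
    next
      show "continuous_on {0..x} H1" using that
        by (intro continuous_at_imp_continuous_on ballI DERIV_isCont[OF dH1]) auto
    qed
    moreover have "H1 0 = 0" by (simp add: H1_def G1_def)
    ultimately show ?thesis by simp
  qed
  define Q where "Q x = G1 x / x" for x
  have Qmono: "Q x < Q y" if "0 < x" "x < y" "y < X" for x y
  proof (rule DERIV_pos_imp_increasing_open[OF that(2)])
    fix z assume z: "x < z" "z < y"
    have "(Q has_real_derivative (G2 z * z - 1 * G1 z) / (z ^ Suc (Suc 0))) (at z)"
      unfolding Q_def using z that
      by (intro DERIV_quotient dG1 DERIV_ident) auto
    moreover have "(G2 z * z - 1 * G1 z) / (z ^ Suc (Suc 0)) > 0"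
      using H1pos[of z] z that unfolding H1_def by (auto simp: algebra_simps)
    ultimately show "\<exists>w. DERIV Q z :> w \<and> w > 0" by blast
  next
    have "isCont Q z" if "x \<le> z" "z \<le> y" for z
    proof -
      have "(Q has_real_derivative (G2 z * z - 1 * G1 z) / (z ^ Suc (Suc 0))) (at z)"
        unfolding Q_def using \<open>x \<le> z\<close> \<open>z \<le> y\<close> \<open>0 < x\<close> \<open>y < X\<close>
        by (intro DERIV_quotient dG1 DERIV_ident) auto
      thus ?thesis by (rule DERIV_isCont)
    qed
    thus "continuous_on {x..y} Q" by (intro continuous_at_imp_continuous_on) auto
  qed
  define K where "K y = G (sqrt y)" for y
  have dK: "(K has_real_derivative Q (sqrt y) / 2) (at y)" if "0 < y" "y < X\<^sup>2" for y
  proof -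
    have sy: "0 < sqrt y" "sqrt y < X" using that Xpos real_sqrt_less_mono[of y "X^2"] by auto
    have "(K has_real_derivative G1 (sqrt y) * (inverse (sqrt y) / 2)) (at y)"
      unfolding K_def by (rule DERIV_chain2[OF dG DERIV_real_sqrt]) (use sy that in auto)
    thus ?thesis by (simp add: Q_def field_simps)
  qed
  have Kcont: "continuous_on {0..X\<^sup>2} K"
  proof -
    have s: "continuous_on {0..X\<^sup>2} sqrt" by (intro continuous_intros)
    have sr: "lo \<le> q - sqrt y \<and> lo \<le> q + sqrt y" if "0 \<le> y" "y \<le> X\<^sup>2" for y
    proof -
      have "0 \<le> sqrt y" "sqrt y \<le> X" using that Xpos real_sqrt_le_mono[of y "X\<^sup>2"] by auto
      thus ?thesis using X_def qlo by linarith
    qed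
    have c1: "continuous_on {0..X\<^sup>2} (\<lambda>y. g (q - sqrt y))"
      by (rule continuous_on_compose2[OF cont]) (use sr in \<open>auto intro!: continuous_intros\<close>)
    have c2: "continuous_on {0..X\<^sup>2} (\<lambda>y. g (q + sqrt y))"
      by (rule continuous_on_compose2[OF cont]) (use sr in \<open>auto intro!: continuous_intros\<close>)
    show ?thesis unfolding K_def G_def by (intro continuous_on_add c1 c2)
  qed
  define F where "F d = K (W - d) + K (W + d)" for d
  have "F d1 < F d2"
  proof (rule DERIV_pos_imp_increasing_open[OF d(2)])
    fix t assume t: "d1 < t" "t < d2"
    have r1: "0 < W - t" "W - t < X\<^sup>2" "0 < W + t" "W + t < X\<^sup>2" using t d Wd2 by auto
    have "(F has_real_derivative Q (sqrt (W - t)) / 2 * (0 - 1) + Q (sqrt (W + t)) / 2 * (0 + 1)) (at t)"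
      unfolding F_def
      by (intro derivative_intros DERIV_chain2[OF dK] r1)
    moreover have "Q (sqrt (W - t)) < Q (sqrt (W + t))"
    proof (rule Qmono)
      show "0 < sqrt (W - t)" using r1 by simp
      show "sqrt (W - t) < sqrt (W + t)" using r1 t d by simp
      show "sqrt (W + t) < X" using r1 Xpos real_sqrt_less_mono[of "W + t" "X^2"] by simp
    qed
    ultimately show "\<exists>y. DERIV F t :> y \<and> y > 0" by (intro exI) auto
  next
    have "continuous_on {d1..d2} (\<lambda>d. K (W - d))"
      by (rule continuous_on_compose2[OF Kcont]) (use d Wd2 in \<open>auto intro!: continuous_intros\<close>)
    moreover have "continuous_on {d1..d2} (\<lambda>d. K (W + d))"
      by (rule continuous_on_compose2[OF Kcont]) (use d Wd2 in \<open>auto intro!: continuous_intros\<close>)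
    ultimately show "continuous_on {d1..d2} F" unfolding F_def by (intro continuous_on_add)
  qed
  thus ?thesis unfolding F_def K_def G_def by simp
qed


definition Psi :: "(real \<Rightarrow> real) \<Rightarrow> real \<Rightarrow> real \<Rightarrow> real \<Rightarrow> real" where
  "Psi g q a b = g (q - a - b) + g (q - a + b) + g (q + a - b) + g (q + a + b)"

lemma sqrt_plus: "sqrt (a\<^sup>2 + b\<^sup>2 + 2 * \<bar>a * b\<bar>) = \<bar>a\<bar> + \<bar>b\<bar>"
proof -
  have "a\<^sup>2 + b\<^sup>2 + 2 * \<bar>a * b\<bar> = (\<bar>a\<bar> + \<bar>b\<bar>)\<^sup>2"
    by (simp add: power2_eq_square abs_mult algebra_simps)
  thus ?thesis by simp
qed

lemma sqrt_minus: "sqrt (a\<^sup>2 + b\<^sup>2 - 2 * \<bar>a * b\<bar>) = \<bar>\<bar>a\<bar> - \<bar>b\<bar>\<bar>"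
proof -
  have "a\<^sup>2 + b\<^sup>2 - 2 * \<bar>a * b\<bar> = (\<bar>a\<bar> - \<bar>b\<bar>)\<^sup>2"
    by (simp add: power2_eq_square abs_mult algebra_simps)
  thus ?thesis by simp
qed

lemma Psi_K:
  "Psi g q a b =
    (g (q - sqrt (a\<^sup>2 + b\<^sup>2 - 2 * \<bar>a * b\<bar>)) + g (q + sqrt (a\<^sup>2 + b\<^sup>2 - 2 * \<bar>a * b\<bar>))) +
    (g (q - sqrt (a\<^sup>2 + b\<^sup>2 + 2 * \<bar>a * b\<bar>)) + g (q + sqrt (a\<^sup>2 + b\<^sup>2 + 2 * \<bar>a * b\<bar>)))"
  unfolding sqrt_plus sqrt_minus Psi_def
  by (cases "a \<ge> 0"; cases "b \<ge> 0"; cases "\<bar>a\<bar> \<ge> \<bar>b\<bar>")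
     (simp_all add: abs_if algebra_simps)

lemma Psi_cong: "a\<^sup>2 + b\<^sup>2 = a'\<^sup>2 + b'\<^sup>2 \<Longrightarrow> \<bar>a * b\<bar> = \<bar>a' * b'\<bar> \<Longrightarrow> Psi g q a b = Psi g q a' b'"
  unfolding Psi_K by simp

lemma deriv_cpowr:
  "w > 0 \<Longrightarrow> ((\<lambda>w. c * w powr e) has_real_derivative (c * e) * w powr (e - 1)) (at w)"
  using DERIV_cmult[OF has_real_derivative_powr[of w e], of c] by (simp add: mult.assoc)

lemma Psi_strict:
  fixes p q a b a' b' \<sigma> :: real
  assumes sig: "\<sigma> = 1 \<or> \<sigma> = -1"
    and P4: "\<sigma> * (p * (p - 1) * (p - 2) * (p - 3)) > 0"
    and W: "a\<^sup>2 + b\<^sup>2 = a'\<^sup>2 + b'\<^sup>2" and prod: "\<bar>a * b\<bar> < \<bar>a' * b'\<bar>"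
    and v: "q - a' - b' \<ge> 0" "q - a' + b' \<ge> 0" "q + a' - b' \<ge> 0" "q + a' + b' \<ge> 0"
    and vp: "0 < p \<or> (q - a' - b' > 0 \<and> q - a' + b' > 0 \<and> q + a' - b' > 0 \<and> q + a' + b' > 0)"
  shows "\<sigma> * Psi (\<lambda>w. w powr p) q a b < \<sigma> * Psi (\<lambda>w. w powr p) q a' b'"
proof -
  define lo where "lo = q - (\<bar>a'\<bar> + \<bar>b'\<bar>)"
  have lo0: "lo \<ge> 0" using v unfolding lo_def by (cases "a' \<ge> 0"; cases "b' \<ge> 0") auto
  have lop: "0 < p \<or> lo > 0" using vp unfolding lo_def by (cases "a' \<ge> 0"; cases "b' \<ge> 0") auto
  define g where "g w = \<sigma> * w powr p" for w
  define g1 where "g1 w = (\<sigma> * p) * w powr (p - 1)" for w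
  define g2 where "g2 w = (\<sigma> * p * (p - 1)) * w powr (p - 1 - 1)" for w
  define g3 where "g3 w = (\<sigma> * p * (p - 1) * (p - 1 - 1)) * w powr (p - 1 - 1 - 1)" for w
  define g4 where "g4 w = (\<sigma> * p * (p - 1) * (p - 1 - 1) * (p - 1 - 1 - 1)) * w powr (p - 1 - 1 - 1 - 1)" for w
  define W where "W = a\<^sup>2 + b\<^sup>2"
  have "(g (q - sqrt (W - 2 * \<bar>a * b\<bar>)) + g (q + sqrt (W - 2 * \<bar>a * b\<bar>))) + (g (q - sqrt (W + 2 * \<bar>a * b\<bar>)) + g (q + sqrt (W + 2 * \<bar>a * b\<bar>)))
       < (g (q - sqrt (W - 2 * \<bar>a' * b'\<bar>)) + g (q + sqrt (W - 2 * \<bar>a' * b'\<bar>))) + (g (q - sqrt (W + 2 * \<bar>a' * b'\<bar>)) + g (q + sqrt (W + 2 * \<bar>a' * b'\<bar>)))"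
  proof (rule core[where lo = lo and gA = g1 and gB = g2 and gC = g3 and gD = g4])
    fix w assume w: "w > lo"
    hence w0: "w > 0" using lo0 by simp
    show "(g has_real_derivative g1 w) (at w)" unfolding g_def g1_def by (rule deriv_cpowr[OF w0])
    show "(g1 has_real_derivative g2 w) (at w)" unfolding g2_def g1_def by (rule deriv_cpowr[OF w0])
    show "(g2 has_real_derivative g3 w) (at w)" unfolding g2_def g3_def by (rule deriv_cpowr[OF w0])
    show "(g3 has_real_derivative g4 w) (at w)" unfolding g4_def g3_def by (rule deriv_cpowr[OF w0])
    have "\<sigma> * p * (p - 1) * (p - 1 - 1) * (p - 1 - 1 - 1) = \<sigma> * (p * (p - 1) * (p - 2) * (p - 3))"
      by (simp add: algebra_simps)
    thus "g4 w > 0" unfolding g4_def using P4 w0 by simp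
  next
    show "continuous_on {lo..} g" unfolding g_def
      by (intro continuous_intros continuous_on_powr') (use lo0 lop in auto)
  next
    show "0 \<le> 2 * \<bar>a * b\<bar>" by simp
    show "2 * \<bar>a * b\<bar> < 2 * \<bar>a' * b'\<bar>" using prod by simp
    have "0 \<le> (\<bar>a'\<bar> - \<bar>b'\<bar>)\<^sup>2" by simp
    thus "2 * \<bar>a' * b'\<bar> \<le> W" unfolding W_def W by (simp add: power2_eq_square abs_mult algebra_simps)
    show "lo \<le> q - sqrt (W + 2 * \<bar>a' * b'\<bar>)" unfolding W_def W sqrt_plus lo_def by simp
  qed
  moreover have "\<sigma> * Psi (\<lambda>w. w powr p) q a b = Psi g q a b" unfolding Psi_def g_def by (simp add: algebra_simps)
  moreover have "\<sigma> * Psi (\<lambda>w. w powr p) q a' b' = Psi g q a' b'" unfolding Psi_def g_def by (simp add: algebra_simps)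
  ultimately show ?thesis unfolding Psi_K[of g q a b] Psi_K[of g q a' b'] W_def W by simp
qed

lemma Psi_cubic:
  fixes k :: nat
  assumes k: "k \<in> {1,2,3}" and W: "a\<^sup>2 + b\<^sup>2 = a'\<^sup>2 + b'\<^sup>2"
  shows "Psi (\<lambda>w. w ^ k) q a b = Psi (\<lambda>w. w ^ k) q a' b'"
proof -
  have "Psi (\<lambda>w. w ^ k) q a b = (if k = 1 then 4 * q else if k = 2 then 4 * q\<^sup>2 + 4 * (a\<^sup>2 + b\<^sup>2)
     else 4 * q^3 + 12 * q * (a\<^sup>2 + b\<^sup>2))" for a b
    using k unfolding Psi_def by (auto simp: power2_eq_square power3_eq_cube algebra_simps)
  thus ?thesis using W by simp
qed


definition fl :: "'n \<Rightarrow> real^'n \<Rightarrow> real^'n" where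
  "fl i A = (\<chi> k. if k = i then - A $ k else A $ k)"

definition V0 :: "'n \<Rightarrow> 'n \<Rightarrow> (real^'n) set" where
  "V0 i j = {A \<in> cube_vertices. A $ i = 1/2 \<and> A $ j = 1/2}"

definition rest :: "'n \<Rightarrow> 'n \<Rightarrow> real^'n \<Rightarrow> real^'n \<Rightarrow> real" where
  "rest i j x y = (\<Sum>k\<in>UNIV - {i, j}. x $ k * y $ k)"

lemma fl_nth: "fl i A $ k = (if k = i then - A $ k else A $ k)"
  by (simp add: fl_def)

lemma fl_fl: "fl i (fl i A) = A" by (simp add: vec_eq_iff fl_nth)

lemma fl_comm: "fl i (fl j A) = fl j (fl i A)" by (simp add: vec_eq_iff fl_nth)

lemma fl_V: "A \<in> cube_vertices \<Longrightarrow> fl i A \<in> cube_vertices"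
  by (auto simp: cube_vertices_def fl_nth)

lemma finite_V: "finite (cube_vertices :: (real^'n) set)"
proof -
  have "cube_vertices \<subseteq> (\<lambda>f. \<chi> i. f i) ` (UNIV \<rightarrow>\<^sub>E {1/2, -(1/2)} :: ('n \<Rightarrow> real) set)"
  proof
    fix x :: "real^'n" assume "x \<in> cube_vertices"
    hence "(\<lambda>i. x $ i) \<in> (UNIV \<rightarrow>\<^sub>E {1/2, -(1/2)})" by (auto simp: cube_vertices_def)
    moreover have "x = (\<chi> i. x $ i)" by simp
    ultimately show "x \<in> (\<lambda>f. \<chi> i. f i) ` (UNIV \<rightarrow>\<^sub>E {1/2, -(1/2)})" by blast
  qed
  moreover have "finite (UNIV \<rightarrow>\<^sub>E {1/2, -(1/2)} :: ('n \<Rightarrow> real) set)"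
    by (intro finite_PiE) auto
  ultimately show ?thesis by (metis finite_imageI finite_subset)
qed

lemma V_inner_self: "A \<in> cube_vertices \<Longrightarrow> A \<bullet> A = real CARD('n) / 4" for A :: "real^'n"
proof -
  assume A: "A \<in> cube_vertices"
  have "A \<bullet> A = (\<Sum>i\<in>UNIV. A $ i * A $ i)" by (simp add: inner_vec_def)
  also have "\<dots> = (\<Sum>i\<in>(UNIV::'n set). 1/4)"
  proof (intro sum.cong refl)
    fix k
    have "A $ k = 1/2 \<or> A $ k = -(1/2)" using A by (simp add: cube_vertices_def)
    thus "A $ k * A $ k = 1/4"
    proof
      assume h: "A $ k = 1/2" show ?thesis unfolding h by simp
    next
      assume h: "A $ k = -(1/2)" show ?thesis unfolding h by simp
    qed
  qed
  finally show ?thesis by simp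
qed

lemma dist_rep:
  fixes M A :: "real^'n"
  assumes "M \<in> sphere 0 r" "A \<in> cube_vertices"
  shows "(dist M A)\<^sup>2 + h = (r\<^sup>2 + real CARD('n) / 4 + h) - 2 * (M \<bullet> A)"
proof -
  have "(dist M A)\<^sup>2 = (M - A) \<bullet> (M - A)" by (simp add: dist_norm power2_norm_eq_inner)
  also have "\<dots> = M \<bullet> M - 2 * (M \<bullet> A) + A \<bullet> A" by (simp add: inner_diff inner_commute)
  also have "M \<bullet> M = r\<^sup>2" using assms by (simp add: power2_norm_eq_inner[symmetric] dist_norm)
  finally show ?thesis using V_inner_self[OF assms(2)] by simp
qed

lemma inner_split:
  fixes x y :: "real^'n"
  assumes "i \<noteq> j"
  shows "x \<bullet> y = x $ i * y $ i + x $ j * y $ j + rest i j x y"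
proof -
  have U: "UNIV = insert i (insert j (UNIV - {i, j}))" by auto
  have "x \<bullet> y = (\<Sum>k\<in>UNIV. x $ k * y $ k)" by (simp add: inner_vec_def)
  also have "\<dots> = (\<Sum>k\<in>insert i (insert j (UNIV - {i, j})). x $ k * y $ k)" using U by metis
  also have "\<dots> = x $ i * y $ i + x $ j * y $ j + rest i j x y"
    using assms by (simp add: rest_def add.assoc)
  finally show ?thesis .
qed

lemma rest_fl: "rest i j x (fl i A) = rest i j x A" "rest i j x (fl j A) = rest i j x A"
  by (auto simp: rest_def fl_nth intro!: sum.cong)

lemma rest_cong: "(\<And>k. k \<noteq> i \<Longrightarrow> k \<noteq> j \<Longrightarrow> x $ k = y $ k) \<Longrightarrow> rest i j x A = rest i j y A"
  by (auto simp: rest_def intro!: sum.cong)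

lemma flip_split:
  assumes S: "finite S" "S \<subseteq> cube_vertices" "\<And>A. A \<in> S \<Longrightarrow> fl i A \<in> S"
  shows "(\<Sum>A\<in>S. F A) = (\<Sum>A\<in>{A\<in>S. A $ i = 1/2}. F A + F (fl i A))"
proof -
  let ?P = "{A\<in>S. A $ i = 1/2}" and ?N = "{A\<in>S. A $ i = -(1/2)}"
  have SU: "S = ?P \<union> ?N"
  proof
    show "S \<subseteq> ?P \<union> ?N"
    proof
      fix A assume A: "A \<in> S"
      hence "A \<in> cube_vertices" using S(2) by blast
      hence "A $ i = 1/2 \<or> A $ i = -(1/2)" unfolding cube_vertices_def by blast
      thus "A \<in> ?P \<union> ?N" using A by blast
    qed
  qed blast
  have disj: "?P \<inter> ?N = {}" by auto
  have NI: "?N = fl i ` ?P"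
  proof
    show "?N \<subseteq> fl i ` ?P"
    proof
      fix A assume A: "A \<in> ?N"
      hence "fl i A \<in> ?P" using S(3) by (auto simp: fl_nth)
      moreover have "A = fl i (fl i A)" by (simp add: fl_fl)
      ultimately show "A \<in> fl i ` ?P" by blast
    qed
    show "fl i ` ?P \<subseteq> ?N" using S(3) by (auto simp: fl_nth)
  qed
  have inj: "inj_on (fl i) ?P" by (rule inj_on_inverseI[where g = "fl i"]) (simp add: fl_fl)
  have "sum F S = sum F (?P \<union> ?N)" using SU by (rule arg_cong)
  also have "\<dots> = sum F ?P + sum F ?N"
    by (rule sum.union_disjoint) (use S(1) in auto)
  finally have "(\<Sum>A\<in>S. F A) = (\<Sum>A\<in>?P. F A) + (\<Sum>A\<in>?N. F A)" .
  also have "(\<Sum>A\<in>?N. F A) = (\<Sum>A\<in>?P. F (fl i A))"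
    unfolding NI by (subst sum.reindex[OF inj]) simp
  finally show ?thesis by (simp add: sum.distrib)
qed

lemma decomp:
  assumes ij: "i \<noteq> j"
  shows "(\<Sum>A\<in>cube_vertices. F A) =
    (\<Sum>A\<in>V0 i j. F A + F (fl i A) + F (fl j A) + F (fl i (fl j A)))"
proof -
  let ?Vi = "{A\<in>cube_vertices. A $ i = 1/2}"
  have "(\<Sum>A\<in>cube_vertices. F A) = (\<Sum>A\<in>?Vi. F A + F (fl i A))"
    by (intro flip_split finite_V fl_V) auto
  also have "\<dots> = (\<Sum>A\<in>{A\<in>?Vi. A $ j = 1/2}. (F A + F (fl i A)) + (F (fl j A) + F (fl i (fl j A))))"
    by (subst flip_split[where i = j]) (use finite_V ij in \<open>auto simp: fl_V fl_nth fl_comm\<close>)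
  also have "{A\<in>?Vi. A $ j = 1/2} = V0 i j" by (auto simp: V0_def)
  finally show ?thesis by (simp add: add.assoc)
qed

lemma V0_sub: "A \<in> V0 i j \<Longrightarrow> A \<in> cube_vertices" by (simp add: V0_def)

lemma V0_ne: "V0 i j \<noteq> ({} :: (real^'n) set)"
proof -
  have "((\<chi> k. (1/2::real)) :: real^'n) \<in> V0 i j" by (simp add: V0_def cube_vertices_def)
  thus ?thesis by blast
qed

lemma finite_V0: "finite (V0 i j)"
  using finite_V by (rule finite_subset[rotated]) (auto simp: V0_def)

lemma four_vals:
  fixes M :: "real^'n" and c :: real
  assumes ij: "i \<noteq> j" and A: "A \<in> V0 i j"
  defines "q \<equiv> c - 2 * rest i j M A"
  shows "c - 2 * (M \<bullet> A) = q - M$i - M$j"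
    and "c - 2 * (M \<bullet> fl i A) = q + M$i - M$j"
    and "c - 2 * (M \<bullet> fl j A) = q - M$i + M$j"
    and "c - 2 * (M \<bullet> fl i (fl j A)) = q + M$i + M$j"
proof -
  have Ai: "A $ i = 1/2" "A $ j = 1/2" using A by (auto simp: V0_def)
  show "c - 2 * (M \<bullet> A) = q - M$i - M$j"
    unfolding q_def inner_split[OF ij] by (simp add: Ai algebra_simps)
  show "c - 2 * (M \<bullet> fl i A) = q + M$i - M$j"
    unfolding q_def inner_split[OF ij] using ij by (simp add: Ai rest_fl fl_nth algebra_simps)
  show "c - 2 * (M \<bullet> fl j A) = q - M$i + M$j"
    unfolding q_def inner_split[OF ij] using ij by (simp add: Ai rest_fl fl_nth algebra_simps)
  show "c - 2 * (M \<bullet> fl i (fl j A)) = q + M$i + M$j"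
    unfolding q_def inner_split[OF ij] using ij by (simp add: Ai rest_fl fl_nth algebra_simps)
qed


lemma Hn_dec:
  fixes M :: "real^'n"
  assumes M: "M \<in> sphere 0 r" and ij: "i \<noteq> j"
  shows "Hn h lam M = (\<Sum>A\<in>V0 i j. Psi (\<lambda>w. rpow w (lam/2))
            ((r\<^sup>2 + real CARD('n) / 4 + h) - 2 * rest i j M A) (M$i) (M$j))"
proof -
  define cc where "cc = r\<^sup>2 + real CARD('n) / 4 + h"
  define g where "g w = rpow w (lam/2)" for w
  have "Hn h lam M = (\<Sum>A\<in>cube_vertices. g (cc - 2 * (M \<bullet> A)))"
    unfolding Hn_def g_def cc_def by (intro sum.cong refl) (simp add: dist_rep[OF M])
  also have "\<dots> = (\<Sum>A\<in>V0 i j. g (cc - 2 * (M \<bullet> A)) + g (cc - 2 * (M \<bullet> fl i A))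
      + g (cc - 2 * (M \<bullet> fl j A)) + g (cc - 2 * (M \<bullet> fl i (fl j A))))"
    by (rule decomp[OF ij])
  also have "\<dots> = (\<Sum>A\<in>V0 i j. Psi g (cc - 2 * rest i j M A) (M$i) (M$j))"
  proof (intro sum.cong refl)
    fix A assume A: "A \<in> V0 i j"
    show "g (cc - 2 * (M \<bullet> A)) + g (cc - 2 * (M \<bullet> fl i A)) + g (cc - 2 * (M \<bullet> fl j A)) +
        g (cc - 2 * (M \<bullet> fl i (fl j A))) = Psi g (cc - 2 * rest i j M A) (M $ i) (M $ j)"
      unfolding Psi_def four_vals[OF ij A, of cc M] by (simp add: algebra_simps)
  qed
  finally show ?thesis unfolding g_def cc_def .
qed

lemma four_P:
  fixes M :: "real^'n"
  assumes M: "M \<in> sphere 0 r" and ij: "i \<noteq> j" and A: "A \<in> V0 i j"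
    and P: "\<forall>B\<in>cube_vertices. P ((dist M B)\<^sup>2 + h)"
  defines "q \<equiv> (r\<^sup>2 + real CARD('n) / 4 + h) - 2 * rest i j M A"
  shows "P (q - M$i - M$j) \<and> P (q + M$i - M$j) \<and> P (q - M$i + M$j) \<and> P (q + M$i + M$j)"
proof -
  have AV: "A \<in> cube_vertices" using A by (simp add: V0_def)
  have V: "A \<in> cube_vertices" "fl i A \<in> cube_vertices" "fl j A \<in> cube_vertices" "fl i (fl j A) \<in> cube_vertices"
    using AV by (auto intro: fl_V)
  show ?thesis using P V dist_rep[OF M, of _ h] four_vals[OF ij A, of "r\<^sup>2 + real CARD('n) / 4 + h" M]
    unfolding q_def by metis
qed

lemma pair_eq:
  fixes M N :: "real^'n"
  assumes M: "M \<in> sphere 0 r" and N: "N \<in> sphere 0 r" and ij: "i \<noteq> j"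
    and oth: "\<And>k. k \<noteq> i \<Longrightarrow> k \<noteq> j \<Longrightarrow> N$k = M$k"
    and W: "(M$i)\<^sup>2 + (M$j)\<^sup>2 = (N$i)\<^sup>2 + (N$j)\<^sup>2" and pr: "\<bar>M$i * M$j\<bar> = \<bar>N$i * N$j\<bar>"
  shows "Hn h lam M = Hn h lam N"
  unfolding Hn_dec[OF M ij] Hn_dec[OF N ij]
  by (intro sum.cong refl) (simp add: rest_cong[OF oth] Psi_cong[OF W pr])

lemma pair_strict:
  fixes M N :: "real^'n" and \<sigma> lam :: real
  assumes M: "M \<in> sphere 0 r" and N: "N \<in> sphere 0 r" and ij: "i \<noteq> j"
    and oth: "\<And>k. k \<noteq> i \<Longrightarrow> k \<noteq> j \<Longrightarrow> N$k = M$k"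
    and W: "(M$i)\<^sup>2 + (M$j)\<^sup>2 = (N$i)\<^sup>2 + (N$j)\<^sup>2" and pr: "\<bar>M$i * M$j\<bar> < \<bar>N$i * N$j\<bar>"
    and sig: "\<sigma> = 1 \<or> \<sigma> = -1"
    and P4: "\<sigma> * ((lam/2) * (lam/2 - 1) * (lam/2 - 2) * (lam/2 - 3)) > 0"
    and val: "0 < lam \<or> (\<forall>B\<in>cube_vertices. (dist N B)\<^sup>2 + h > 0)" and h: "h \<ge> 0"
  shows "\<sigma> * Hn h lam M < \<sigma> * Hn h lam N"
proof -
  define p where "p = lam / 2"
  have p0: "p \<noteq> 0" using P4 p_def by auto
  have rp: "(\<lambda>w. rpow w (lam/2)) = (\<lambda>w. w powr p)" using p0 by (auto simp: rpow_def p_def)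
  define cc where "cc = r\<^sup>2 + real CARD('n) / 4 + h"
  have "(\<Sum>A\<in>V0 i j. \<sigma> * Psi (\<lambda>w. w powr p) (cc - 2 * rest i j M A) (M$i) (M$j))
      < (\<Sum>A\<in>V0 i j. \<sigma> * Psi (\<lambda>w. w powr p) (cc - 2 * rest i j N A) (N$i) (N$j))"
  proof (rule sum_strict_mono[OF finite_V0 V0_ne])
    fix A assume A: "A \<in> V0 i j"
    have nn: "\<forall>B\<in>cube_vertices. 0 \<le> (dist N B)\<^sup>2 + h" using h by (auto intro!: add_nonneg_nonneg)
    have eqr: "rest i j N A = rest i j M A" by (rule rest_cong) (use oth in auto)
    have nn: "\<forall>B\<in>cube_vertices. 0 \<le> (dist N B)\<^sup>2 + h" using h by (auto intro!: add_nonneg_nonneg)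
    have v: "0 \<le> cc - 2 * rest i j M A - N$i - N$j" "0 \<le> cc - 2 * rest i j M A - N$i + N$j"
      "0 \<le> cc - 2 * rest i j M A + N$i - N$j" "0 \<le> cc - 2 * rest i j M A + N$i + N$j"
      using four_P[OF N ij A nn] unfolding eqr cc_def by auto
    have vp: "0 < p \<or> (0 < cc - 2 * rest i j M A - N$i - N$j \<and> 0 < cc - 2 * rest i j M A - N$i + N$j \<and>
      0 < cc - 2 * rest i j M A + N$i - N$j \<and> 0 < cc - 2 * rest i j M A + N$i + N$j)"
    proof (cases "0 < lam")
      case True thus ?thesis by (simp add: p_def)
    next
      case False
      hence pos: "\<forall>B\<in>cube_vertices. 0 < (dist N B)\<^sup>2 + h" using val by auto
      show ?thesis using four_P[OF N ij A pos] unfolding eqr cc_def by auto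
    qed
    have "\<sigma> * Psi (\<lambda>w. w powr p) (cc - 2 * rest i j M A) (M$i) (M$j)
        < \<sigma> * Psi (\<lambda>w. w powr p) (cc - 2 * rest i j M A) (N$i) (N$j)"
      by (rule Psi_strict[OF sig _ W pr v vp]) (use P4 in \<open>simp add: p_def\<close>)
    thus "\<sigma> * Psi (\<lambda>w. w powr p) (cc - 2 * rest i j M A) (M$i) (M$j)
        < \<sigma> * Psi (\<lambda>w. w powr p) (cc - 2 * rest i j N A) (N$i) (N$j)" unfolding eqr .
  qed
  thus ?thesis unfolding Hn_dec[OF M ij] Hn_dec[OF N ij] rp sum_distrib_left cc_def .
qed


lemma sphere_iff: "r > 0 \<Longrightarrow> (M :: real^'n) \<in> sphere 0 r \<longleftrightarrow> M \<bullet> M = r\<^sup>2"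
proof -
  assume r: "r > 0"
  have "M \<in> sphere 0 r \<longleftrightarrow> norm M = r" by simp
  also have "\<dots> \<longleftrightarrow> (norm M)\<^sup>2 = r\<^sup>2" using r by (auto simp: power2_eq_iff_nonneg)
  also have "\<dots> \<longleftrightarrow> M \<bullet> M = r\<^sup>2" by (simp add: power2_norm_eq_inner)
  finally show ?thesis .
qed

definition mv :: "real^'n \<Rightarrow> 'n \<Rightarrow> 'n \<Rightarrow> real^'n" where
  "mv M i j = (\<chi> k. if k = i then sqrt ((M$i)\<^sup>2 + (M$j)\<^sup>2) else if k = j then 0 else M$k)"

definition eqz :: "real^'n \<Rightarrow> 'n \<Rightarrow> 'n \<Rightarrow> real^'n" where
  "eqz M i j = (\<chi> k. if k = i \<or> k = j then sqrt (((M$i)\<^sup>2 + (M$j)\<^sup>2) / 2) else M$k)"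

lemma mv_sphere:
  assumes r: "r > 0" and M: "M \<in> sphere 0 r" and ij: "i \<noteq> j"
  shows "mv M i j \<in> sphere 0 r"
proof -
  have "rest i j (mv M i j) (mv M i j) = rest i j M M" unfolding rest_def mv_def
    by (intro sum.cong refl) auto
  hence "mv M i j \<bullet> mv M i j = M \<bullet> M"
    unfolding inner_split[OF ij, of "mv M i j"] inner_split[OF ij, of M] using ij
    by (simp add: mv_def power2_eq_square[symmetric])
  moreover have "M \<bullet> M = r\<^sup>2" using sphere_iff[OF r] M by blast
  ultimately show ?thesis by (subst sphere_iff[OF r]) simp
qed

lemma eqz_sphere:
  assumes r: "r > 0" and M: "M \<in> sphere 0 r" and ij: "i \<noteq> j"
  shows "eqz M i j \<in> sphere 0 r"
proof -
  have "rest i j (eqz M i j) (eqz M i j) = rest i j M M" unfolding rest_def eqz_def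
    by (intro sum.cong refl) auto
  moreover have "sqrt (((M$i)\<^sup>2 + (M$j)\<^sup>2) / 2) * sqrt (((M$i)\<^sup>2 + (M$j)\<^sup>2) / 2) = ((M$i)\<^sup>2 + (M$j)\<^sup>2) / 2"
    by (simp add: power2_eq_square[symmetric])
  ultimately have "eqz M i j \<bullet> eqz M i j = M \<bullet> M"
    unfolding inner_split[OF ij, of "eqz M i j"] inner_split[OF ij, of M] using ij
    by (simp add: eqz_def power2_eq_square)
  moreover have "M \<bullet> M = r\<^sup>2" using sphere_iff[OF r] M by blast
  ultimately show ?thesis by (subst sphere_iff[OF r]) simp
qed

lemma single_axis:
  fixes M :: "real^'n"
  assumes r: "r > 0" and M: "M \<in> sphere 0 r" and c: "card {k. M$k \<noteq> 0} \<le> 1"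
  shows "M \<in> axis_points r"
proof -
  have ne: "{k. M$k \<noteq> 0} \<noteq> {}"
  proof
    assume "{k. M$k \<noteq> 0} = {}"
    hence "M = 0" by (auto simp: vec_eq_iff)
    thus False using M r by simp
  qed
  then obtain i where S: "{k. M$k \<noteq> 0} = {i}" using c
    by (metis card_0_eq card_le_Suc0_iff_eq finite ex_in_conv le_zero_eq One_nat_def
        is_singletonI' is_singleton_the_elem)
  have oth: "M$k = 0" if "k \<noteq> i" for k using S that by auto
  have "M \<bullet> M = (\<Sum>k\<in>UNIV. M$k * M$k)" by (simp add: inner_vec_def)
  also have "\<dots> = M$i * M$i"
    by (subst sum.remove[of _ i]) (auto simp: oth)
  moreover have "M \<bullet> M = r\<^sup>2" using sphere_iff[OF r] M by blast
  ultimately have "(M$i)\<^sup>2 = r\<^sup>2" by (simp add: power2_eq_square)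
  hence "M$i = r \<or> M$i = -r" by (simp add: power2_eq_iff)
  thus ?thesis
  proof
    assume "M$i = r"
    hence "M = r *\<^sub>R axis i 1" using oth by (auto simp: vec_eq_iff axis_def)
    thus ?thesis by (auto simp: axis_points_def)
  next
    assume "M$i = -r"
    hence "M = - (r *\<^sub>R axis i 1)" using oth by (auto simp: vec_eq_iff axis_def)
    thus ?thesis by (auto simp: axis_points_def)
  qed
qed

lemma chain:
  fixes P :: "real^'n \<Rightarrow> bool" and Q :: "real^'n \<Rightarrow> real^'n \<Rightarrow> bool"
  assumes r: "r > 0"
    and step: "\<And>M i j. M \<in> sphere 0 r \<Longrightarrow> P M \<Longrightarrow> i \<noteq> j \<Longrightarrow> M$i \<noteq> 0 \<Longrightarrow> M$j \<noteq> 0 \<Longrightarrow>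
         P (mv M i j) \<and> Q (mv M i j) M"
    and trans: "\<And>x y z. Q x y \<Longrightarrow> Q y z \<Longrightarrow> Q x z"
  shows "M \<in> sphere 0 r \<Longrightarrow> P M \<Longrightarrow> M \<in> axis_points r \<or> (\<exists>e\<in>axis_points r. Q e M)"
proof (induct "card {k. M$k \<noteq> 0}" arbitrary: M rule: less_induct)
  case less
  show ?case
  proof (cases "card {k. M$k \<noteq> 0} \<le> 1")
    case True thus ?thesis using single_axis[OF r less(2)] by blast
  next
    case False
    then obtain i j where ij: "i \<noteq> j" "M$i \<noteq> 0" "M$j \<noteq> 0"
      by (metis (mono_tags, lifting) card_le_Suc0_iff_eq finite mem_Collect_eq One_nat_def)
    have s: "P (mv M i j)" "Q (mv M i j) M" using step[OF less(2,3) ij] by auto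
    have sub: "{k. mv M i j $ k \<noteq> 0} \<subseteq> {k. M$k \<noteq> 0} - {j}"
      using ij by (auto simp: mv_def)
    have "card {k. mv M i j $ k \<noteq> 0} \<le> card ({k. M$k \<noteq> 0} - {j})"
      by (rule card_mono[OF _ sub]) simp
    also have "\<dots> < card {k. M$k \<noteq> 0}" using ij by (intro card_Diff1_less) auto
    finally have "card {k. mv M i j $ k \<noteq> 0} < card {k. M$k \<noteq> 0}" .
    from less(1)[OF this mv_sphere[OF r less(2) ij(1)] s(1)]
    show ?thesis using s(2) trans by blast
  qed
qed


lemma other_index: "CARD('n::finite) \<ge> 2 \<Longrightarrow> \<exists>k::'n. k \<noteq> i"
proof (rule ccontr)
  assume "CARD('n) \<ge> 2" "\<not> (\<exists>k::'n. k \<noteq> i)"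
  hence "(UNIV :: 'n set) = {i}" by auto
  hence "CARD('n) = card {i}" by (rule arg_cong)
  hence "CARD('n) = 1" by simp
  thus False using \<open>CARD('n) \<ge> 2\<close> by simp
qed

lemma zero_coord_valid:
  fixes M :: "real^'n"
  assumes "M$k = 0" "h \<ge> 0" "B \<in> cube_vertices"
  shows "(dist M B)\<^sup>2 + h > 0"
proof -
  have "B$k = 1/2 \<or> B$k = -(1/2)" using assms(3) unfolding cube_vertices_def by blast
  hence "B$k \<noteq> 0" by auto
  hence "M \<noteq> B" using assms(1) by auto
  hence "dist M B > 0" by simp
  thus ?thesis using assms(2) by (simp add: add_pos_nonneg)
qed

lemma axis_sphere:
  fixes i :: "'m::finite"
  shows "\<bar>a\<bar> = r \<Longrightarrow> ((a *\<^sub>R axis i (1::real)) :: real^'m) \<in> sphere 0 r"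
  by simp

lemma axis_pair:
  fixes i j :: "'n::finite"
  assumes ij: "i \<noteq> j" and a: "\<bar>a\<bar> = r" and b: "\<bar>b\<bar> = r"
  shows "Hn h lam (a *\<^sub>R axis i (1::real) :: real^'n) = Hn h lam (b *\<^sub>R axis j 1)"
proof (rule pair_eq[OF axis_sphere[OF a] axis_sphere[OF b] ij])
  show "(b *\<^sub>R axis j 1) $ k = (a *\<^sub>R axis i 1 :: real^'n) $ k" if "k \<noteq> i" "k \<noteq> j" for k
    using that by (simp add: axis_def)
  have "a\<^sup>2 = b\<^sup>2" using a b by (metis power2_abs)
  thus "((a *\<^sub>R axis i 1 :: real^'n) $ i)\<^sup>2 + ((a *\<^sub>R axis i 1 :: real^'n) $ j)\<^sup>2 =
    ((b *\<^sub>R axis j 1 :: real^'n) $ i)\<^sup>2 + ((b *\<^sub>R axis j 1 :: real^'n) $ j)\<^sup>2"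
    using ij by (simp add: axis_def)
  show "\<bar>(a *\<^sub>R axis i 1 :: real^'n) $ i * (a *\<^sub>R axis i 1 :: real^'n) $ j\<bar> =
    \<bar>(b *\<^sub>R axis j 1 :: real^'n) $ i * (b *\<^sub>R axis j 1 :: real^'n) $ j\<bar>"
    using ij by (simp add: axis_def)
qed

lemma axis_points_form: "(X::real^'n::finite) \<in> axis_points r \<Longrightarrow> \<exists>(i::'n) a. \<bar>a\<bar> = \<bar>r\<bar> \<and> X = a *\<^sub>R axis i (1::real)"
proof -
  assume "X \<in> axis_points r"
  then obtain i where "X = r *\<^sub>R axis i 1 \<or> X = - (r *\<^sub>R axis i 1)" unfolding axis_points_def by blast
  thus ?thesis
  proof
    assume "X = r *\<^sub>R axis i 1" thus ?thesis by blast
  next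
    assume "X = - (r *\<^sub>R axis i 1)"
    hence "X = (-r) *\<^sub>R axis i 1" by simp
    thus ?thesis by (intro exI[of _ i] exI[of _ "-r"]) simp
  qed
qed

lemma E_const:
  assumes n2: "CARD('n) \<ge> 2" and r: "r > 0"
    and X: "X \<in> (axis_points r :: (real^'n) set)" and Y: "Y \<in> (axis_points r :: (real^'n) set)"
  shows "Hn h lam X = Hn h lam Y"
proof -
  obtain i a where Xa: "\<bar>a\<bar> = r" "X = a *\<^sub>R axis i 1" using axis_points_form[OF X] r by auto
  obtain j b where Yb: "\<bar>b\<bar> = r" "Y = b *\<^sub>R axis j 1" using axis_points_form[OF Y] r by auto
  show ?thesis
  proof (cases "i = j")
    case False thus ?thesis using axis_pair[OF False Xa(1) Yb(1)] Xa Yb by simp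
  next
    case True
    obtain k where k: "k \<noteq> i" using other_index[OF n2] by blast
    have rr: "\<bar>r\<bar> = r" using r by simp
    have "Hn h lam X = Hn h lam (r *\<^sub>R axis k 1)" using axis_pair[OF k[symmetric] Xa(1) rr] Xa by simp
    also have "\<dots> = Hn h lam Y" using axis_pair[OF k rr Yb(1)] Yb True by simp
    finally show ?thesis .
  qed
qed

lemma E_valid:
  assumes n2: "CARD('n) \<ge> 2" and r: "r > 0" and h: "h \<ge> 0" and X: "X \<in> (axis_points r :: (real^'n) set)"
  shows "X \<in> sphere 0 r" "\<forall>B\<in>cube_vertices. (dist X B)\<^sup>2 + h > 0"
proof -
  obtain i a where Xa: "\<bar>a\<bar> = r" "X = a *\<^sub>R axis i 1" using axis_points_form[OF X] r by auto
  show "X \<in> sphere 0 r" using Xa axis_sphere by blast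
  obtain k where k: "k \<noteq> i" using other_index[OF n2] by blast
  have "X $ k = 0" using Xa k by (simp add: axis_def)
  thus "\<forall>B\<in>cube_vertices. (dist X B)\<^sup>2 + h > 0" using zero_coord_valid h by blast
qed

lemma diag_sphere:
  assumes r: "r > 0" and X: "X \<in> (diag_points r :: (real^'n) set)"
  shows "X \<in> sphere 0 r"
proof -
  have "X \<bullet> X = (\<Sum>k\<in>UNIV. X$k * X$k)" by (simp add: inner_vec_def)
  also have "\<dots> = (\<Sum>k\<in>(UNIV::'n set). r\<^sup>2 / real CARD('n))"
  proof (intro sum.cong refl)
    fix k
    have "X$k = r / sqrt (real CARD('n)) \<or> X$k = - (r / sqrt (real CARD('n)))"
      using X unfolding diag_points_def by blast
    hence "X$k * X$k = (r / sqrt (real CARD('n)))\<^sup>2"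
    proof
      assume hh: "X$k = r / sqrt (real CARD('n))" show ?thesis unfolding hh by (simp add: power2_eq_square)
    next
      assume hh: "X$k = - (r / sqrt (real CARD('n)))" show ?thesis unfolding hh by (simp add: power2_eq_square)
    qed
    thus "X$k * X$k = r\<^sup>2 / real CARD('n)" by (simp add: power_divide)
  qed
  also have "\<dots> = r\<^sup>2" by simp
  finally show ?thesis using sphere_iff[OF r] by blast
qed

lemma D_const:
  assumes r: "r > 0" and X: "X \<in> (diag_points r :: (real^'n) set)" and Y: "Y \<in> (diag_points r :: (real^'n) set)"
  shows "Hn h lam X = Hn h lam Y"
proof -
  define cc where "cc = r\<^sup>2 + real CARD('n) / 4 + h"
  define T where "T A = (\<chi> k::'n. if X$k = Y$k then A$k else - A$k)" for A :: "real^'n"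
  have TT: "T (T A) = A" for A by (simp add: T_def vec_eq_iff)
  have TV: "T A \<in> cube_vertices" if "A \<in> cube_vertices" for A
    using that by (auto simp: T_def cube_vertices_def)
  have inn: "Y \<bullet> A = X \<bullet> T A" for A
  proof -
    have "Y$k * A$k = X$k * T A $ k" for k
    proof (cases "X$k = Y$k")
      case True thus ?thesis by (simp add: T_def)
    next
      case False
      moreover have "X$k = r / sqrt (real CARD('n)) \<or> X$k = - (r / sqrt (real CARD('n)))"
        using X unfolding diag_points_def by blast
      moreover have "Y$k = r / sqrt (real CARD('n)) \<or> Y$k = - (r / sqrt (real CARD('n)))"
        using Y unfolding diag_points_def by blast
      ultimately have "Y$k = - X$k" by linarith
      thus ?thesis using False by (simp add: T_def)
    qed
    thus ?thesis by (simp add: inner_vec_def)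
  qed
  have "Hn h lam X = (\<Sum>A\<in>cube_vertices. rpow (cc - 2 * (X \<bullet> A)) (lam/2))"
    unfolding Hn_def cc_def by (intro sum.cong refl) (simp add: dist_rep[OF diag_sphere[OF r X]])
  also have "\<dots> = (\<Sum>A\<in>cube_vertices. rpow (cc - 2 * (Y \<bullet> A)) (lam/2))"
    by (rule sum.reindex_bij_witness[where i = T and j = T]) (auto simp: TT TV inn)
  also have "\<dots> = Hn h lam Y"
    unfolding Hn_def cc_def by (intro sum.cong refl) (simp add: dist_rep[OF diag_sphere[OF r Y]])
  finally show ?thesis .
qed

lemma rpow_nat: "w \<ge> 0 \<Longrightarrow> k \<ge> 1 \<Longrightarrow> rpow w (real k) = w ^ k"
  by (simp add: rpow_def powr_realpow')

lemma pair_cubic: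
  fixes M N :: "real^'n" and lam :: real
  assumes M: "M \<in> sphere 0 r" and N: "N \<in> sphere 0 r" and ij: "i \<noteq> j"
    and oth: "\<And>k. k \<noteq> i \<Longrightarrow> k \<noteq> j \<Longrightarrow> N$k = M$k"
    and W: "(M$i)\<^sup>2 + (M$j)\<^sup>2 = (N$i)\<^sup>2 + (N$j)\<^sup>2"
    and lam: "lam \<in> {2, 4, 6}" and h: "h \<ge> 0"
  shows "Hn h lam M = Hn h lam N"
proof -
  obtain k :: nat where k: "k \<in> {1,2,3}" "lam / 2 = real k" using lam by auto
  define cc where "cc = r\<^sup>2 + real CARD('n) / 4 + h"
  have nn: "\<forall>B\<in>cube_vertices. 0 \<le> (dist X B)\<^sup>2 + h" for X :: "real^'n"
    using h by (auto intro!: add_nonneg_nonneg)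
  have ps: "Psi (\<lambda>w. rpow w (lam/2)) q a b = Psi (\<lambda>w. w ^ k) q a b"
    if "0 \<le> q - a - b" "0 \<le> q + a - b" "0 \<le> q - a + b" "0 \<le> q + a + b" for q a b
  proof -
    have rk: "rpow w (real k) = w ^ k" if "0 \<le> w" for w using rpow_nat[OF that, of k] k(1) by auto
    show ?thesis unfolding Psi_def k(2) by (simp only: rk that)
  qed
  show ?thesis unfolding Hn_dec[OF M ij] Hn_dec[OF N ij]
  proof (intro sum.cong refl)
    fix A assume A: "A \<in> V0 i j"
    have eqr: "rest i j N A = rest i j M A" by (rule rest_cong) (use oth in auto)
    show "Psi (\<lambda>w. rpow w (lam / 2)) (r\<^sup>2 + real CARD('n) / 4 + h - 2 * rest i j M A) (M $ i) (M $ j) =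
          Psi (\<lambda>w. rpow w (lam / 2)) (r\<^sup>2 + real CARD('n) / 4 + h - 2 * rest i j N A) (N $ i) (N $ j)"
      unfolding eqr using four_P[OF M ij A nn] four_P[OF N ij A nn] unfolding eqr
      by (simp add: ps Psi_cubic[OF k(1) W])
  qed
qed


lemma E_ext:
  fixes \<sigma> lam h r :: real and M :: "real^'n"
  assumes n2: "CARD('n) \<ge> 2" and r: "r > 0" and h: "h \<ge> 0"
    and sig: "\<sigma> = 1 \<or> \<sigma> = -1"
    and P4: "\<sigma> * ((lam/2) * (lam/2 - 1) * (lam/2 - 2) * (lam/2 - 3)) > 0"
    and M: "M \<in> sphere (0::real^'n) r" and val: "0 < lam \<or> (\<forall>B\<in>cube_vertices. (dist M B)\<^sup>2 + h > 0)"
  shows "M \<in> (axis_points r :: (real^'n) set) \<or> (\<exists>e\<in>(axis_points r :: (real^'n) set). \<sigma> * Hn h lam e < \<sigma> * Hn h lam M)"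
proof -
  have step: "(0 < lam \<or> (\<forall>B\<in>cube_vertices. (dist (mv M i j) B)\<^sup>2 + h > 0)) \<and>
        \<sigma> * Hn h lam (mv M i j) < \<sigma> * Hn h lam M"
    if M: "M \<in> sphere (0::real^'n) r" and PM: "0 < lam \<or> (\<forall>B\<in>cube_vertices. (dist M B)\<^sup>2 + h > 0)"
    and ij: "i \<noteq> j" and nz: "M$i \<noteq> 0" "M$j \<noteq> 0" for M :: "real^'n" and i j
  proof
    have mj: "mv M i j $ j = 0" using ij by (simp add: mv_def)
    show "0 < lam \<or> (\<forall>B\<in>cube_vertices. (dist (mv M i j) B)\<^sup>2 + h > 0)"
      using zero_coord_valid[OF mj h] by blast
    show "\<sigma> * Hn h lam (mv M i j) < \<sigma> * Hn h lam M"
    proof (rule pair_strict[OF mv_sphere[OF r M ij] M ij _ _ _ sig P4 PM h])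
      show "M $ k = mv M i j $ k" if "k \<noteq> i" "k \<noteq> j" for k using that by (simp add: mv_def)
      show "(mv M i j $ i)\<^sup>2 + (mv M i j $ j)\<^sup>2 = (M $ i)\<^sup>2 + (M $ j)\<^sup>2"
        using ij by (simp add: mv_def)
      show "\<bar>mv M i j $ i * mv M i j $ j\<bar> < \<bar>M $ i * M $ j\<bar>" using nz mj by simp
    qed
  qed
  have tr: "\<sigma> * Hn h lam x < \<sigma> * Hn h lam z"
    if "\<sigma> * Hn h lam x < \<sigma> * Hn h lam y" "\<sigma> * Hn h lam y < \<sigma> * Hn h lam z" for x y z :: "real^'n"
    using that by linarith
  show ?thesis
    by (rule chain[where P = "\<lambda>M. 0 < lam \<or> (\<forall>B\<in>cube_vertices. (dist M B)\<^sup>2 + h > 0)"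
      and Q = "\<lambda>x y. \<sigma> * Hn h lam x < \<sigma> * Hn h lam y", OF r step tr M val])
qed

lemma allD:
  fixes M :: "real^'n"
  assumes r: "r > 0" and M: "M \<in> sphere (0::real^'n) r" and eq: "\<And>i j. \<bar>M$i\<bar> = \<bar>M$j\<bar>"
  shows "M \<in> (diag_points r :: (real^'n) set)"
proof -
  obtain i0 :: 'n where True by blast
  define t where "t = \<bar>M$i0\<bar>"
  have "M \<bullet> M = (\<Sum>k\<in>UNIV. M$k * M$k)" by (simp add: inner_vec_def)
  also have "\<dots> = (\<Sum>k\<in>(UNIV::'n set). t\<^sup>2)"
  proof (intro sum.cong refl)
    fix k
    have "M$k * M$k = \<bar>M$k\<bar>\<^sup>2" by (simp add: power2_eq_square)
    thus "M$k * M$k = t\<^sup>2" using eq[of k i0] t_def by simp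
  qed
  also have "\<dots> = real CARD('n) * t\<^sup>2" by simp
  moreover have "M \<bullet> M = r\<^sup>2" using sphere_iff[OF r] M by blast
  ultimately have "real CARD('n) * t\<^sup>2 = r\<^sup>2" by simp
  hence "t\<^sup>2 = r\<^sup>2 / real CARD('n)" by (simp add: field_simps)
  hence "t = sqrt (r\<^sup>2 / real CARD('n))" using t_def by (metis abs_ge_zero real_sqrt_unique)
  also have "\<dots> = r / sqrt (real CARD('n))" using r by (simp add: real_sqrt_divide)
  finally have tt: "t = r / sqrt (real CARD('n))" .
  have "M$k = r / sqrt (real CARD('n)) \<or> M$k = - (r / sqrt (real CARD('n)))" for k
    using eq[of k i0] unfolding t_def[symmetric] tt by (auto simp: abs_if split: if_splits)
  thus ?thesis by (simp add: diag_points_def)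
qed

lemma D_ext:
  fixes \<sigma> lam h r :: real and M :: "real^'n"
  assumes r: "r > 0" and h: "h \<ge> 0"
    and sig: "\<sigma> = 1 \<or> \<sigma> = -1"
    and P4: "\<sigma> * ((lam/2) * (lam/2 - 1) * (lam/2 - 2) * (lam/2 - 3)) > 0"
    and valall: "0 < lam \<or> (\<forall>N\<in>sphere (0::real^'n) r. \<forall>B\<in>cube_vertices. (dist N B)\<^sup>2 + h > 0)"
    and M: "M \<in> sphere (0::real^'n) r" and nD: "M \<notin> (diag_points r :: (real^'n) set)"
  shows "\<exists>N\<in>sphere (0::real^'n) r. \<sigma> * Hn h lam M < \<sigma> * Hn h lam N"
proof -
  obtain i j where ne: "\<bar>M$i\<bar> \<noteq> \<bar>M$j\<bar>" using allD[OF r M] nD by blast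
  hence ij: "i \<noteq> j" by auto
  define N where "N = eqz M i j"
  have N: "N \<in> sphere (0::real^'n) r" unfolding N_def by (rule eqz_sphere[OF r M ij])
  have Ni: "N$i = sqrt (((M$i)\<^sup>2 + (M$j)\<^sup>2) / 2)" "N$j = sqrt (((M$i)\<^sup>2 + (M$j)\<^sup>2) / 2)"
    by (simp_all add: N_def eqz_def)
  have sq: "sqrt (((M$i)\<^sup>2 + (M$j)\<^sup>2) / 2) * sqrt (((M$i)\<^sup>2 + (M$j)\<^sup>2) / 2) = ((M$i)\<^sup>2 + (M$j)\<^sup>2) / 2"
    by (simp add: power2_eq_square[symmetric])
  have "\<sigma> * Hn h lam M < \<sigma> * Hn h lam N"
  proof (rule pair_strict[OF M N ij _ _ _ sig P4 _ h])
    show "N $ k = M $ k" if "k \<noteq> i" "k \<noteq> j" for k using that by (simp add: N_def eqz_def)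
    show "(M $ i)\<^sup>2 + (M $ j)\<^sup>2 = (N $ i)\<^sup>2 + (N $ j)\<^sup>2"
      unfolding Ni power2_eq_square[of "sqrt _"] sq by simp
    have "0 < (\<bar>M$i\<bar> - \<bar>M$j\<bar>)\<^sup>2" using ne by simp
    hence "\<bar>M$i * M$j\<bar> < ((M$i)\<^sup>2 + (M$j)\<^sup>2) / 2"
      by (simp add: power2_eq_square abs_mult algebra_simps)
    thus "\<bar>M $ i * M $ j\<bar> < \<bar>N $ i * N $ j\<bar>" unfolding Ni sq by simp
    show "0 < lam \<or> (\<forall>B\<in>cube_vertices. 0 < (dist N B)\<^sup>2 + h)" using valall N by blast
  qed
  thus ?thesis using N by blast
qed

lemma Hn_cont:
  fixes lam h r :: real
  assumes lam0: "lam \<noteq> 0" and h: "h \<ge> 0"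
    and valall: "0 < lam \<or> (\<forall>N\<in>sphere (0::real^'n) r. \<forall>B\<in>cube_vertices. (dist N B)\<^sup>2 + h > 0)"
  shows "continuous_on (sphere (0::real^'n) r) (Hn h lam)"
proof -
  have "(Hn h lam :: real^'n \<Rightarrow> real) = (\<lambda>M. \<Sum>A\<in>cube_vertices. ((dist M A)\<^sup>2 + h) powr (lam / 2))"
    using lam0 by (auto simp: Hn_def rpow_def fun_eq_iff)
  moreover have "continuous_on (sphere (0::real^'n) r) (\<lambda>M. \<Sum>A\<in>cube_vertices. ((dist M A)\<^sup>2 + h) powr (lam / 2))"
  proof (intro continuous_on_sum continuous_on_powr')
    fix A :: "real^'n" assume A: "A \<in> cube_vertices"
    show "continuous_on (sphere (0::real^'n) r) (\<lambda>M. (dist M A)\<^sup>2 + h)" by (intro continuous_intros)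
    show "continuous_on (sphere (0::real^'n) r) (\<lambda>M. lam / 2)" by (intro continuous_intros)
    show "\<forall>M\<in>sphere (0::real^'n) r. 0 \<le> (dist M A)\<^sup>2 + h \<and> ((dist M A)\<^sup>2 + h = 0 \<longrightarrow> 0 < lam / 2)"
    proof (intro ballI conjI impI)
      fix M :: "real^'n" assume Ms: "M \<in> sphere 0 r"
      show "0 \<le> (dist M A)\<^sup>2 + h" using h by (intro add_nonneg_nonneg) auto
      assume z: "(dist M A)\<^sup>2 + h = 0"
      from valall show "0 < lam / 2"
      proof
        assume "0 < lam" thus ?thesis by simp
      next
        assume "\<forall>N\<in>sphere (0::real^'n) r. \<forall>B\<in>cube_vertices. (dist N B)\<^sup>2 + h > 0"
        hence "(dist M A)\<^sup>2 + h > 0" using Ms A by blast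
        thus ?thesis using z by simp
      qed
    qed
  qed
  ultimately show ?thesis by simp
qed

lemma sig_max:
  fixes \<sigma> lam h r :: real
  assumes r: "r > 0" and h: "h \<ge> 0"
    and sig: "\<sigma> = 1 \<or> \<sigma> = -1"
    and P4: "\<sigma> * ((lam/2) * (lam/2 - 1) * (lam/2 - 2) * (lam/2 - 3)) > 0"
    and valall: "0 < lam \<or> (\<forall>N\<in>sphere (0::real^'n) r. \<forall>B\<in>cube_vertices. (dist N B)\<^sup>2 + h > 0)"
  shows "{M\<in>sphere (0::real^'n) r. \<forall>N\<in>sphere (0::real^'n) r. \<sigma> * Hn h lam N \<le> \<sigma> * Hn h lam M} = (diag_points r :: (real^'n) set)"
proof -
  have lam0: "lam \<noteq> 0" using P4 by auto
  have "continuous_on (sphere (0::real^'n) r) (\<lambda>M. \<sigma> * Hn h lam M)"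
    by (intro continuous_intros Hn_cont[OF lam0 h valall])
  hence "\<exists>x\<in>sphere (0::real^'n) r. \<forall>y\<in>sphere (0::real^'n) r. \<sigma> * Hn h lam y \<le> \<sigma> * Hn h lam x"
    by (intro continuous_attains_sup) (use r in auto)
  then obtain M0 where M0: "M0 \<in> sphere (0::real^'n) r" "\<forall>y\<in>sphere (0::real^'n) r. \<sigma> * Hn h lam y \<le> \<sigma> * Hn h lam M0"
    by blast
  have M0D: "M0 \<in> (diag_points r :: (real^'n) set)"
  proof (rule ccontr)
    assume "M0 \<notin> (diag_points r :: (real^'n) set)"
    then obtain N where "N \<in> sphere (0::real^'n) r" "\<sigma> * Hn h lam M0 < \<sigma> * Hn h lam N"
      using D_ext[OF r h sig P4 valall M0(1)] by blast
    thus False using M0(2) by fastforce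
  qed
  show ?thesis
  proof
    show "{M\<in>sphere (0::real^'n) r. \<forall>N\<in>sphere (0::real^'n) r. \<sigma> * Hn h lam N \<le> \<sigma> * Hn h lam M} \<subseteq> (diag_points r :: (real^'n) set)"
    proof
      fix M assume M: "M \<in> {M\<in>sphere (0::real^'n) r. \<forall>N\<in>sphere (0::real^'n) r. \<sigma> * Hn h lam N \<le> \<sigma> * Hn h lam M}"
      show "M \<in> (diag_points r :: (real^'n) set)"
      proof (rule ccontr)
        assume "M \<notin> (diag_points r :: (real^'n) set)"
        then obtain N where "N \<in> sphere (0::real^'n) r" "\<sigma> * Hn h lam M < \<sigma> * Hn h lam N"
          using D_ext[OF r h sig P4 valall] M by blast
        thus False using M by fastforce
      qed
    qed
    show "(diag_points r :: (real^'n) set) \<subseteq> {M\<in>sphere (0::real^'n) r. \<forall>N\<in>sphere (0::real^'n) r. \<sigma> * Hn h lam N \<le> \<sigma> * Hn h lam M}"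
    proof
      fix X assume X: "X \<in> (diag_points r :: (real^'n) set)"
      have "Hn h lam X = Hn h lam M0" using D_const[OF r X M0D] .
      thus "X \<in> {M\<in>sphere (0::real^'n) r. \<forall>N\<in>sphere (0::real^'n) r. \<sigma> * Hn h lam N \<le> \<sigma> * Hn h lam M}"
        using diag_sphere[OF r X] M0(2) by simp
    qed
  qed
qed

lemma sig_min:
  fixes \<sigma> lam h r :: real and S :: "(real^'n) set"
  assumes n2: "CARD('n) \<ge> 2" and r: "r > 0" and h: "h \<ge> 0"
    and sig: "\<sigma> = 1 \<or> \<sigma> = -1"
    and P4: "\<sigma> * ((lam/2) * (lam/2 - 1) * (lam/2 - 2) * (lam/2 - 3)) > 0"
    and ES: "(axis_points r :: (real^'n) set) \<subseteq> S" and S: "S \<subseteq> sphere (0::real^'n) r"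
    and valS: "\<And>M. M \<in> S \<Longrightarrow> 0 < lam \<or> (\<forall>B\<in>cube_vertices. (dist M B)\<^sup>2 + h > 0)"
  shows "{M\<in>S. \<forall>N\<in>S. \<sigma> * Hn h lam M \<le> \<sigma> * Hn h lam N} = (axis_points r :: (real^'n) set)"
proof
  show "{M\<in>S. \<forall>N\<in>S. \<sigma> * Hn h lam M \<le> \<sigma> * Hn h lam N} \<subseteq> (axis_points r :: (real^'n) set)"
  proof
    fix M assume M: "M \<in> {M\<in>S. \<forall>N\<in>S. \<sigma> * Hn h lam M \<le> \<sigma> * Hn h lam N}"
    hence MS: "M \<in> S" by blast
    show "M \<in> (axis_points r :: (real^'n) set)"
    proof (rule ccontr)
      assume nE: "M \<notin> (axis_points r :: (real^'n) set)"
      then obtain e where e: "e \<in> (axis_points r :: (real^'n) set)" "\<sigma> * Hn h lam e < \<sigma> * Hn h lam M"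
        using E_ext[OF n2 r h sig P4 _ valS[OF MS]] S MS by blast
      have "\<sigma> * Hn h lam M \<le> \<sigma> * Hn h lam e" using M ES e(1) by blast
      thus False using e(2) by linarith
    qed
  qed
  show "(axis_points r :: (real^'n) set) \<subseteq> {M\<in>S. \<forall>N\<in>S. \<sigma> * Hn h lam M \<le> \<sigma> * Hn h lam N}"
  proof
    fix X assume X: "X \<in> (axis_points r :: (real^'n) set)"
    have "\<sigma> * Hn h lam X \<le> \<sigma> * Hn h lam N" if N: "N \<in> S" for N
    proof -
      have "N \<in> (axis_points r :: (real^'n) set) \<or> (\<exists>e\<in>(axis_points r :: (real^'n) set). \<sigma> * Hn h lam e < \<sigma> * Hn h lam N)"
        using E_ext[OF n2 r h sig P4 _ valS[OF N]] S N by blast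
      thus ?thesis using E_const[OF n2 r X] by (metis order.strict_implies_order order_refl)
    qed
    thus "X \<in> {M\<in>S. \<forall>N\<in>S. \<sigma> * Hn h lam M \<le> \<sigma> * Hn h lam N}" using X ES by blast
  qed
qed


lemma nondeg_valid:
  assumes r: "r > 0" and h: "h \<ge> 0" and nd: "\<not> (h = 0 \<and> r = sqrt (real CARD('n)) / 2)"
  shows "\<forall>N\<in>sphere (0::real^'n) r. \<forall>B\<in>cube_vertices. (dist N B)\<^sup>2 + h > 0"
proof (intro ballI)
  fix N :: "real^'n" and B :: "real^'n" assume N: "N \<in> sphere 0 r" and B: "B \<in> cube_vertices"
  show "(dist N B)\<^sup>2 + h > 0"
  proof (cases "h = 0")
    case False thus ?thesis using h by (simp add: add_nonneg_pos)
  next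
    case True
    have "N \<noteq> B"
    proof
      assume "N = B"
      hence "B \<bullet> B = r\<^sup>2" using N sphere_iff[OF r] by blast
      hence "r\<^sup>2 = real CARD('n) / 4" using V_inner_self[OF B] by simp
      hence "r = sqrt (real CARD('n) / 4)" using r by (metis less_eq_real_def real_sqrt_unique)
      also have "\<dots> = sqrt (real CARD('n)) / 2" by (simp add: real_sqrt_divide)
      finally show False using nd True by simp
    qed
    thus ?thesis using True by simp
  qed
qed

lemma rpow_nonneg: "rpow x a \<ge> 0" by (simp add: rpow_def)

lemma unbounded:
  assumes n2: "CARD('n) \<ge> 2" and lam: "lam < 0" and r: "r = sqrt (real CARD('n)) / 2"
  shows "\<not> bdd_above (Hn 0 lam ` {M \<in> sphere (0::real^'n) r. \<forall>A\<in>cube_vertices. (dist M A)\<^sup>2 + 0 > 0})"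
proof
  define \<Gamma>' where "\<Gamma>' = {M \<in> sphere (0::real^'n) r. \<forall>A\<in>cube_vertices. (dist M A)\<^sup>2 + 0 > 0}"
  assume "bdd_above (Hn 0 lam ` {M \<in> sphere (0::real^'n) r. \<forall>A\<in>cube_vertices. (dist M A)\<^sup>2 + 0 > 0})"
  then obtain Bd where Bd: "\<And>M. M \<in> \<Gamma>' \<Longrightarrow> Hn 0 lam M \<le> Bd" unfolding bdd_above_def \<Gamma>'_def by blast
  obtain i :: 'n where True by blast
  obtain j where ij: "j \<noteq> i" using other_index[OF n2] by blast
  define p where "p = lam / 2"
  have p: "p < 0" using lam p_def by simp
  define B' where "B' = max Bd 1"
  have B': "B' > 0" "Bd \<le> B'" unfolding B'_def by auto
  define \<epsilon> where "\<epsilon> = (2 * B') powr (1 / p)"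
  have \<epsilon>: "\<epsilon> > 0" using B' unfolding \<epsilon>_def by simp
  have \<epsilon>p: "\<epsilon> powr p = 2 * B'" unfolding \<epsilon>_def using p B' by (simp add: powr_powr)
  define \<delta> where "\<delta> = min (1/4) (sqrt (\<epsilon> / 10))"
  have \<delta>: "0 < \<delta>" "\<delta> \<le> 1/4" "\<delta>\<^sup>2 \<le> \<epsilon> / 10"
  proof -
    show "0 < \<delta>" "\<delta> \<le> 1/4" using \<epsilon> by (auto simp: \<delta>_def)
    have "\<delta> \<le> sqrt (\<epsilon> / 10)" by (simp add: \<delta>_def)
    hence "\<delta>\<^sup>2 \<le> (sqrt (\<epsilon> / 10))\<^sup>2" using \<open>0 < \<delta>\<close> by (intro power_mono) auto
    thus "\<delta>\<^sup>2 \<le> \<epsilon> / 10" using \<epsilon> by simp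
  qed
  define u where "u = 1/2 - \<delta>"
  define v where "v = sqrt (1/2 - u\<^sup>2)"
  have vsq: "1/2 - u\<^sup>2 = 1/4 + \<delta> - \<delta>\<^sup>2" by (simp add: u_def power2_eq_square algebra_simps)
  have v1: "1/2 \<le> v"
  proof -
    have "\<delta> * \<delta> \<le> \<delta> * 1" using \<delta> by (intro mult_left_mono) auto
    hence "1/4 \<le> 1/4 + \<delta> - \<delta>\<^sup>2" by (simp add: power2_eq_square)
    hence "sqrt (1/4) \<le> v" unfolding v_def vsq by (rule real_sqrt_le_mono)
    thus ?thesis by (simp add: real_sqrt_divide)
  qed
  have v2: "v \<le> 1/2 + \<delta>"
  proof -
    have "1/4 + \<delta> - \<delta>\<^sup>2 \<le> (1/2 + \<delta>)\<^sup>2" by (simp add: power2_eq_square algebra_simps)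
    hence "v \<le> sqrt ((1/2 + \<delta>)\<^sup>2)" unfolding v_def vsq by (rule real_sqrt_le_mono)
    thus ?thesis using \<delta> by simp
  qed
  define A0 where "A0 = (\<chi> k::'n. (1/2::real))"
  have A0V: "A0 \<in> cube_vertices" by (simp add: A0_def cube_vertices_def)
  define P where "P = (\<chi> k::'n. if k = i then u else if k = j then v else 1/2)"
  have Pi: "P$i = u" "P$j = v" using ij by (simp_all add: P_def)
  have rP: "rest i j P P = rest i j A0 A0" unfolding rest_def by (intro sum.cong refl) (simp add: P_def A0_def)
  have vv: "v * v = 1/2 - u * u"
  proof -
    have "\<delta> * \<delta> \<le> \<delta> * 1" using \<delta> by (intro mult_left_mono) auto
    hence "0 \<le> 1/2 - u\<^sup>2" unfolding vsq by (simp add: power2_eq_square)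
    thus ?thesis by (simp add: v_def power2_eq_square[symmetric])
  qed
  have PP: "P \<bullet> P = A0 \<bullet> A0"
    unfolding inner_split[OF ij[symmetric], of P] inner_split[OF ij[symmetric], of A0] rP Pi
    using vv by (simp add: A0_def)
  have rr: "r\<^sup>2 = real CARD('n) / 4" unfolding r by (simp add: power_divide)
  have rpos: "r > 0" unfolding r by simp
  have "P \<bullet> P = r\<^sup>2" using PP V_inner_self[OF A0V] rr by simp
  hence Psph: "P \<in> sphere 0 r" using sphere_iff[OF rpos] by blast
  have PG: "P \<in> \<Gamma>'"
  proof -
    have "\<forall>A\<in>cube_vertices. (dist P A)\<^sup>2 + 0 > 0"
    proof
      fix A :: "real^'n" assume A: "A \<in> cube_vertices"
      have "A$i = 1/2 \<or> A$i = -(1/2)" using A unfolding cube_vertices_def by blast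
      hence "P \<noteq> A" using Pi \<delta> unfolding u_def by auto
      thus "(dist P A)\<^sup>2 + 0 > 0" by simp
    qed
    thus ?thesis using Psph unfolding \<Gamma>'_def by blast
  qed
  define d where "d = (dist P A0)\<^sup>2"
  have dval: "d = (u - 1/2)\<^sup>2 + (v - 1/2)\<^sup>2"
  proof -
    have "rest i j (P - A0) (P - A0) = 0" unfolding rest_def
      by (intro sum.neutral) (simp add: P_def A0_def)
    hence "(P - A0) \<bullet> (P - A0) = (u - 1/2)\<^sup>2 + (v - 1/2)\<^sup>2"
      unfolding inner_split[OF ij[symmetric], of "P - A0"] using Pi by (simp add: A0_def power2_eq_square)
    thus ?thesis unfolding d_def by (simp add: dist_norm power2_norm_eq_inner)
  qed
  have d0: "d > 0" unfolding dval u_def using \<delta> by (simp add: add_pos_nonneg)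
  have d\<epsilon>: "d < \<epsilon>"
  proof -
    have "(v - 1/2)\<^sup>2 \<le> \<delta>\<^sup>2" using v1 v2 \<delta> by (intro power_mono) auto
    hence "d \<le> 2 * \<delta>\<^sup>2" unfolding dval u_def by (simp add: power2_eq_square)
    thus ?thesis using \<delta> \<epsilon> by simp
  qed
  have "rpow d p > 2 * B'"
    using powr_less_mono2_neg[OF p d0 d\<epsilon>] \<epsilon>p p by (simp add: rpow_def)
  moreover have "rpow ((dist P A0)\<^sup>2 + 0) (lam/2) \<le> Hn 0 lam P"
    unfolding Hn_def by (rule member_le_sum) (simp_all add: A0V finite_V rpow_nonneg)
  moreover have "rpow d p = rpow ((dist P A0)\<^sup>2 + 0) (lam/2)" by (simp add: d_def p_def)
  ultimately have "Hn 0 lam P > Bd" using B' by linarith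
  thus False using Bd[OF PG] by simp
qed

lemma const_case:
  fixes M N :: "real^'n"
  assumes n2: "CARD('n) \<ge> 2" and r: "r > 0" and h: "h \<ge> 0" and lam: "lam \<in> {0, 2, 4, 6}"
    and M: "M \<in> sphere 0 r" and N: "N \<in> sphere 0 r"
  shows "Hn h lam M = Hn h lam N"
proof (cases "lam = 0")
  case True
  have r1: "rpow x (lam/2) = 1" for x using True by (simp add: rpow_def)
  show ?thesis unfolding Hn_def r1 by simp
next
  case False
  hence lam': "lam \<in> {2,4,6}" using lam by auto
  have step: "True \<and> Hn h lam (mv X i j) = Hn h lam X"
    if X: "X \<in> sphere 0 r" and ij: "i \<noteq> j" for X :: "real^'n" and i j
  proof -
    have "Hn h lam (mv X i j) = Hn h lam X"
    proof (rule pair_cubic[OF mv_sphere[OF r X ij] X ij _ _ lam' h])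
      show "X $ k = mv X i j $ k" if "k \<noteq> i" "k \<noteq> j" for k using that by (simp add: mv_def)
      show "(mv X i j $ i)\<^sup>2 + (mv X i j $ j)\<^sup>2 = (X $ i)\<^sup>2 + (X $ j)\<^sup>2"
        using ij by (simp add: mv_def)
    qed
    thus ?thesis by simp
  qed
  have tr: "Hn h lam x = Hn h lam z" if "Hn h lam x = Hn h lam y" "Hn h lam y = Hn h lam z" for x y z :: "real^'n"
    using that by simp
  have ch: "\<exists>e\<in>(axis_points r :: (real^'n) set). Hn h lam e = Hn h lam X" if X: "X \<in> sphere 0 r" for X :: "real^'n"
  proof -
    have "X \<in> (axis_points r :: (real^'n) set) \<or> (\<exists>e\<in>(axis_points r :: (real^'n) set). Hn h lam e = Hn h lam X)"
      by (rule chain[where P = "\<lambda>_. True" and Q = "\<lambda>x y. Hn h lam x = Hn h lam y", OF r step tr X]) simp_all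
    thus ?thesis by blast
  qed
  obtain e1 where e1: "e1 \<in> (axis_points r :: (real^'n) set)" "Hn h lam e1 = Hn h lam M" using ch[OF M] by blast
  obtain e2 where e2: "e2 \<in> (axis_points r :: (real^'n) set)" "Hn h lam e2 = Hn h lam N" using ch[OF N] by blast
  show ?thesis using E_const[OF n2 r e1(1) e2(1), of h lam] e1 e2 by simp
qed


lemma P4_pos1: "p < 0 \<Longrightarrow> p * (p - 1) * (p - 2) * (p - 3) > (0::real)"
proof -
  assume p: "p < 0"
  have a: "p * (p - 1) > 0" using p by (intro mult_neg_neg) auto
  have b: "(p - 2) * (p - 3) > 0" using p by (intro mult_neg_neg) auto
  have "p * (p - 1) * ((p - 2) * (p - 3)) > 0" by (rule mult_pos_pos[OF a b])
  thus ?thesis by (simp add: mult.assoc)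
qed

lemma P4_pos2: "1 < p \<Longrightarrow> p < 2 \<Longrightarrow> p * (p - 1) * (p - 2) * (p - 3) > (0::real)"
proof -
  assume p: "1 < p" "p < 2"
  have a: "p * (p - 1) > 0" using p by (intro mult_pos_pos) auto
  have b: "(p - 2) * (p - 3) > 0" using p by (intro mult_neg_neg) auto
  have "p * (p - 1) * ((p - 2) * (p - 3)) > 0" by (rule mult_pos_pos[OF a b])
  thus ?thesis by (simp add: mult.assoc)
qed

lemma P4_pos3: "3 < p \<Longrightarrow> p * (p - 1) * (p - 2) * (p - 3) > (0::real)"
proof -
  assume p: "3 < p"
  have a: "p * (p - 1) > 0" using p by (intro mult_pos_pos) auto
  have b: "(p - 2) * (p - 3) > 0" using p by (intro mult_pos_pos) auto
  have "p * (p - 1) * ((p - 2) * (p - 3)) > 0" by (rule mult_pos_pos[OF a b])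
  thus ?thesis by (simp add: mult.assoc)
qed

lemma P4_neg1: "0 < p \<Longrightarrow> p < 1 \<Longrightarrow> p * (p - 1) * (p - 2) * (p - 3) < (0::real)"
proof -
  assume p: "0 < p" "p < 1"
  have a: "p * (p - 1) < 0" using p by (intro mult_pos_neg) auto
  have b: "(p - 2) * (p - 3) > 0" using p by (intro mult_neg_neg) auto
  have "p * (p - 1) * ((p - 2) * (p - 3)) < 0" by (rule mult_neg_pos[OF a b])
  thus ?thesis by (simp add: mult.assoc)
qed

lemma P4_neg2: "2 < p \<Longrightarrow> p < 3 \<Longrightarrow> p * (p - 1) * (p - 2) * (p - 3) < (0::real)"
proof -
  assume p: "2 < p" "p < 3"
  have a: "p * (p - 1) > 0" using p by (intro mult_pos_pos) auto
  have b: "(p - 2) * (p - 3) < 0" using p by (intro mult_pos_neg) auto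
  have "p * (p - 1) * ((p - 2) * (p - 3)) < 0" by (rule mult_pos_neg[OF a b])
  thus ?thesis by (simp add: mult.assoc)
qed

theorem theorem6p3:
  fixes r h :: real
  assumes n2: "CARD('n) \<ge> 2"
    and r: "r > 0" and h: "h \<ge> 0"
  defines "\<Gamma> \<equiv> sphere (0::real^'n) r"
    and "D \<equiv> diag_points r :: (real^'n) set"
    and "E \<equiv> axis_points r :: (real^'n) set"
    and "\<Gamma>' \<equiv> {M \<in> sphere (0::real^'n) r. \<forall>A\<in>cube_vertices. (dist M A)\<^sup>2 + h > 0}"
  shows
    "(\<forall>lam < 0.
        min_points \<Gamma>' (Hn h lam) = E \<and>
        (if h = 0 \<and> r = sqrt (real CARD('n)) / 2
         then \<not> bdd_above (Hn h lam ` \<Gamma>')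
         else max_points \<Gamma> (Hn h lam) = D)) \<and>
     (\<forall>lam. (\<forall>M\<in>\<Gamma>. \<forall>N\<in>\<Gamma>. Hn h lam M = Hn h lam N) \<longleftrightarrow> lam \<in> {0, 2, 4, 6}) \<and>
     (\<forall>lam. (0 < lam \<and> lam < 2) \<or> (4 < lam \<and> lam < 6) \<longrightarrow>
        max_points \<Gamma> (Hn h lam) = E \<and> min_points \<Gamma> (Hn h lam) = D) \<and>
     (\<forall>lam. 2 < lam \<and> lam < 4 \<longrightarrow>
        min_points \<Gamma> (Hn h lam) = E \<and> max_points \<Gamma> (Hn h lam) = D) \<and>
     (\<forall>lam > 6.
        max_points \<Gamma> (Hn h lam) = D \<and> min_points \<Gamma> (Hn h lam) = E)"
proof -
  have EG': "E \<subseteq> \<Gamma>'" unfolding E_def \<Gamma>'_def using E_valid[OF n2 r h] by blast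
  have EG: "E \<subseteq> \<Gamma>" unfolding E_def \<Gamma>_def using E_valid[OF n2 r h] by blast
  have G'G: "\<Gamma>' \<subseteq> \<Gamma>" unfolding \<Gamma>'_def \<Gamma>_def by blast
  have one: "\<sigma> = 1 \<or> \<sigma> = -1" if "\<sigma> = 1" for \<sigma> :: real using that by simp
  have mone: "\<sigma> = 1 \<or> \<sigma> = -1" if "\<sigma> = -1" for \<sigma> :: real using that by simp
  have minE: "min_points S (Hn h lam) = E"
    if P4: "(lam/2) * (lam/2 - 1) * (lam/2 - 2) * (lam/2 - 3) > 0" and S: "S = \<Gamma> \<and> 0 < lam \<or> S = \<Gamma>'" for lam S
  proof -
    have P4': "1 * ((lam/2) * (lam/2 - 1) * (lam/2 - 2) * (lam/2 - 3)) > 0" using P4 by simp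
    have "{M\<in>S. \<forall>N\<in>S. 1 * Hn h lam M \<le> 1 * Hn h lam N} = E"
      unfolding E_def
    proof (rule sig_min[OF n2 r h _ P4'])
      show "axis_points r \<subseteq> S" using S EG EG' unfolding E_def by blast
      show "S \<subseteq> sphere 0 r" using S G'G unfolding \<Gamma>_def by blast
      show "0 < lam \<or> (\<forall>B\<in>cube_vertices. (dist M B)\<^sup>2 + h > 0)" if "M \<in> S" for M
        using S that unfolding \<Gamma>'_def by blast
    qed simp
    thus ?thesis unfolding min_points_def by simp
  qed
  have maxE: "max_points \<Gamma> (Hn h lam) = E"
    if P4: "(lam/2) * (lam/2 - 1) * (lam/2 - 2) * (lam/2 - 3) < 0" and lam: "0 < lam" for lam
  proof -
    have P4': "-1 * ((lam/2) * (lam/2 - 1) * (lam/2 - 2) * (lam/2 - 3)) > 0" using P4 by simp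
    have "{M\<in>\<Gamma>. \<forall>N\<in>\<Gamma>. -1 * Hn h lam M \<le> -1 * Hn h lam N} = E"
      unfolding E_def
    proof (rule sig_min[OF n2 r h _ P4'])
      show "axis_points r \<subseteq> \<Gamma>" using EG unfolding E_def by blast
      show "\<Gamma> \<subseteq> sphere 0 r" unfolding \<Gamma>_def by blast
      show "0 < lam \<or> (\<forall>B\<in>cube_vertices. (dist M B)\<^sup>2 + h > 0)" if "M \<in> \<Gamma>" for M using lam by blast
    qed simp
    thus ?thesis unfolding max_points_def by simp
  qed
  have maxD: "max_points \<Gamma> (Hn h lam) = D"
    if P4: "(lam/2) * (lam/2 - 1) * (lam/2 - 2) * (lam/2 - 3) > 0"
    and val: "0 < lam \<or> (\<forall>N\<in>sphere (0::real^'n) r. \<forall>B\<in>cube_vertices. (dist N B)\<^sup>2 + h > 0)" for lam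
  proof -
    have P4': "1 * ((lam/2) * (lam/2 - 1) * (lam/2 - 2) * (lam/2 - 3)) > 0" using P4 by simp
    have "{M\<in>sphere (0::real^'n) r. \<forall>N\<in>sphere (0::real^'n) r. 1 * Hn h lam N \<le> 1 * Hn h lam M} = D"
      unfolding D_def by (rule sig_max[OF r h _ P4' val]) simp
    thus ?thesis unfolding max_points_def \<Gamma>_def by simp
  qed
  have minD: "min_points \<Gamma> (Hn h lam) = D"
    if P4: "(lam/2) * (lam/2 - 1) * (lam/2 - 2) * (lam/2 - 3) < 0" and lam: "0 < lam" for lam
  proof -
    have P4': "-1 * ((lam/2) * (lam/2 - 1) * (lam/2 - 2) * (lam/2 - 3)) > 0" using P4 by simp
    have "{M\<in>sphere (0::real^'n) r. \<forall>N\<in>sphere (0::real^'n) r. -1 * Hn h lam N \<le> -1 * Hn h lam M} = D"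
      unfolding D_def by (rule sig_max[OF r h _ P4']) (use lam in simp_all)
    thus ?thesis unfolding min_points_def \<Gamma>_def by simp
  qed
  have part1: "min_points \<Gamma>' (Hn h lam) = E \<and>
        (if h = 0 \<and> r = sqrt (real CARD('n)) / 2
         then \<not> bdd_above (Hn h lam ` \<Gamma>')
         else max_points \<Gamma> (Hn h lam) = D)" if lam: "lam < 0" for lam
  proof -
    have P4: "(lam/2) * (lam/2 - 1) * (lam/2 - 2) * (lam/2 - 3) > 0" using P4_pos1[of "lam/2"] lam by simp
    have "min_points \<Gamma>' (Hn h lam) = E" by (rule minE[OF P4]) simp
    moreover have "(if h = 0 \<and> r = sqrt (real CARD('n)) / 2
         then \<not> bdd_above (Hn h lam ` \<Gamma>')
         else max_points \<Gamma> (Hn h lam) = D)"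
    proof (cases "h = 0 \<and> r = sqrt (real CARD('n)) / 2")
      case True
      thus ?thesis using unbounded[OF n2 lam, of r] unfolding \<Gamma>'_def by simp
    next
      case False
      show ?thesis unfolding if_not_P[OF False] using maxD[OF P4] nondeg_valid[OF r h False] by blast
    qed
    ultimately show ?thesis by blast
  qed
  have part2: "(\<forall>M\<in>\<Gamma>. \<forall>N\<in>\<Gamma>. Hn h lam M = Hn h lam N) \<longleftrightarrow> lam \<in> {0, 2, 4, 6}" for lam
  proof
    assume "lam \<in> {0, 2, 4, 6}"
    thus "\<forall>M\<in>\<Gamma>. \<forall>N\<in>\<Gamma>. Hn h lam M = Hn h lam N" unfolding \<Gamma>_def using const_case[OF n2 r h] by blast
  next
    assume const: "\<forall>M\<in>\<Gamma>. \<forall>N\<in>\<Gamma>. Hn h lam M = Hn h lam N"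
    show "lam \<in> {0, 2, 4, 6}"
    proof (rule ccontr)
      assume nl: "lam \<notin> {0, 2, 4, 6}"
      define P where "P = (lam/2) * (lam/2 - 1) * (lam/2 - 2) * (lam/2 - 3)"
      have P0: "P \<noteq> 0" using nl unfolding P_def by auto
      define \<sigma> where "\<sigma> = (if P > 0 then 1 else -1 :: real)"
      have sig: "\<sigma> = 1 \<or> \<sigma> = -1" by (simp add: \<sigma>_def)
      have sP: "\<sigma> * P > 0" using P0 by (auto simp: \<sigma>_def)
      obtain e0 where e0: "e0 \<in> E" using E_def by (auto simp: axis_points_def)
      show False
      proof (cases "lam < 0 \<and> h = 0 \<and> r = sqrt (real CARD('n)) / 2")
        case True
        have hr: "lam < 0" "h = 0" "r = sqrt (real CARD('n)) / 2" using True by auto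
        have nb: "\<not> bdd_above (Hn h lam ` \<Gamma>')" using unbounded[OF n2 hr(1) hr(3)] unfolding \<Gamma>'_def hr(2) by simp
        have sb: "Hn h lam ` \<Gamma>' \<subseteq> {Hn h lam e0}" using const G'G EG e0 by blast
        have bb: "bdd_above {Hn h lam e0}" by simp
        show False using bdd_above_mono[OF bb sb] nb by simp
      next
        case False
        have lam0: "lam \<noteq> 0" using nl by auto
        have valall: "0 < lam \<or> (\<forall>N\<in>sphere (0::real^'n) r. \<forall>B\<in>cube_vertices. (dist N B)\<^sup>2 + h > 0)"
          using nondeg_valid[OF r h] False lam0 by force
        define d0 where "d0 = (\<chi> k::'n. r / sqrt (real CARD('n)))"
        have d0D: "d0 \<in> (diag_points r :: (real^'n) set)" by (simp add: d0_def diag_points_def)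
        have d0G: "d0 \<in> sphere 0 r" by (rule diag_sphere[OF r d0D])
        have d0E: "d0 \<notin> (axis_points r :: (real^'n) set)"
        proof
          assume "d0 \<in> (axis_points r :: (real^'n) set)"
          then obtain i a where "d0 = a *\<^sub>R axis i (1::real)" using axis_points_form by blast
          moreover obtain k where "k \<noteq> i" using other_index[OF n2] by blast
          ultimately have "d0 $ k = 0" by (simp add: axis_def)
          moreover have "d0 $ k \<noteq> 0" using r by (simp add: d0_def)
          ultimately show False by simp
        qed
        have "d0 \<in> (axis_points r :: (real^'n) set) \<or> (\<exists>e\<in>(axis_points r :: (real^'n) set). \<sigma> * Hn h lam e < \<sigma> * Hn h lam d0)"
          by (rule E_ext[OF n2 r h sig _ d0G]) (use sP valall d0G in \<open>auto simp: P_def\<close>)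
        then obtain e where e: "e \<in> E" "\<sigma> * Hn h lam e < \<sigma> * Hn h lam d0" using d0E E_def by blast
        have "Hn h lam e = Hn h lam d0" using const e(1) EG d0G \<Gamma>_def by blast
        thus False using e(2) by simp
      qed
    qed
  qed
  have part3: "max_points \<Gamma> (Hn h lam) = E \<and> min_points \<Gamma> (Hn h lam) = D"
    if lam: "(0 < lam \<and> lam < 2) \<or> (4 < lam \<and> lam < 6)" for lam
  proof -
    have P4: "(lam/2) * (lam/2 - 1) * (lam/2 - 2) * (lam/2 - 3) < 0"
      using lam P4_neg1[of "lam/2"] P4_neg2[of "lam/2"] by auto
    have l0: "0 < lam" using lam by auto
    show ?thesis using maxE[OF P4 l0] minD[OF P4 l0] by simp
  qed
  have part4: "min_points \<Gamma> (Hn h lam) = E \<and> max_points \<Gamma> (Hn h lam) = D"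
    if lam: "2 < lam \<and> lam < 4" for lam
  proof -
    have P4: "(lam/2) * (lam/2 - 1) * (lam/2 - 2) * (lam/2 - 3) > 0"
      using lam P4_pos2[of "lam/2"] by auto
    have l0: "0 < lam" using lam by auto
    show ?thesis using minE[OF P4, of \<Gamma>] maxD[OF P4] l0 by simp
  qed
  have part5: "max_points \<Gamma> (Hn h lam) = D \<and> min_points \<Gamma> (Hn h lam) = E"
    if lam: "lam > 6" for lam
  proof -
    have P4: "(lam/2) * (lam/2 - 1) * (lam/2 - 2) * (lam/2 - 3) > 0"
      using lam P4_pos3[of "lam/2"] by auto
    have l0: "0 < lam" using lam by auto
    show ?thesis using minE[OF P4, of \<Gamma>] maxD[OF P4] l0 by simp
  qed
  show ?thesis using part1 part2 part3 part4 part5 by blast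
qed

end
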